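(* Let $\Omega$ be a Polish space and $\nu$ a positive $\sigma$-finite measure on $(-1,1)\times\Omega$ such that $\nu((-a,a)\times\Omega)=\infty$ for all $a\in(0,1]$ and $\iint_{(-1,1)\times\Omega}u^2\,\nu(du\,d\omega)<\infty$. Let $N\sim\mathrm{Po}(\nu)$ be a Poisson random measure on $(-1,1)\times\Omega$ with intensity $\nu$ and $\tilde N=N-\nu$ the compensated Poisson measure. Let $K:[0,1]\times\Omega\to\mathbb R$ be Borel measurable with $\iint_{(-1,1)\times\Omega}K(t,\omega)^2u^2\,\nu(du\,d\omega)<\infty$ for all $t\in[0,1]$, and suppose there exist $\alpha>0$ and a Borel measurable $C:\Omega\to\mathbb R_+$ with $$|K(t,\omega)-K(s,\omega)|^2\le C(\omega)\,|t-s|^{1+\alpha}\quad\text{for all } s,t\in[0,1],\ \omega\in\Omega,$$ and $\iint_{(-1,1)\times\Omega}C(\omega)\,u^2\,\nu(du\,d\omega)<\infty$. For $0<\epsilon\le1$ define $$X^\epsilon_t=\iint_{\{0<|u|<\epsilon\}\times\Omega}K(t,\omega)\,u\,\tilde N(du\,d\omega),\qquad t\in[0,1],$$ taking for each $\epsilon$ a version with continuous sample paths. Then for every $\delta>0$, $$\lim_{\epsilon\to0}{\mathbb P}\Big(\sup_{t\in[0,1]}|X^\epsilon_t|>\delta\Big)=0.$$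
   Context: A Poisson random measure $N\sim\mathrm{Po}(\nu)$ assigns independent Poisson$(\nu(B_i))$ random variables to disjoint Borel sets $B_i$. The stochastic integral against $\tilde N$ is the $L_2$ isometry from $L_2((-1,1)\times\Omega,\nu)$ to square-integrable mean-zero random variables, so ${\mathbb E}X^\epsilon_t=0$ and ${\mathbb E}(X^\epsilon_t)^2=\iint_{\{|u|<\epsilon\}\times\Omega}K(t,\omega)^2u^2\,\nu(du\,d\omega)$. *)

theory Defs
  imports "HOL-Probability.Probability"
begin

text \<open>Poisson random measure with intensity nu on the measurable space of nu,
  realised on the probability space M: for every sample x, N x is a (counting)
  measure on the same measurable space as nu.\<close>
definition poisson_random_measure ::
  "'a measure \<Rightarrow> 'b measure \<Rightarrow> ('a \<Rightarrow> 'b measure) \<Rightarrow> bool" where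
  "poisson_random_measure M nu N \<longleftrightarrow>
     prob_space M \<and>
     (\<forall>x\<in>space M. sets (N x) = sets nu) \<and>
     (\<forall>B\<in>sets nu. (\<lambda>x. emeasure (N x) B) \<in> borel_measurable M) \<and>
     (\<forall>B\<in>sets nu. emeasure nu B < \<infinity> \<longrightarrow>
        (\<forall>k::nat. measure M {x\<in>space M. emeasure (N x) B = of_nat k}
           = exp (- enn2real (emeasure nu B)) * enn2real (emeasure nu B) ^ k / fact k)) \<and>
     (\<forall>B\<in>sets nu. emeasure nu B = \<infinity> \<longrightarrow> (AE x in M. emeasure (N x) B = \<infinity>)) \<and>
     (\<forall>(I::nat set) B. finite I \<longrightarrow> (\<forall>i\<in>I. B i \<in> sets nu) \<longrightarrow> disjoint_family_on B I \<longrightarrow>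
        prob_space.indep_vars M (\<lambda>_. borel) (\<lambda>i x. emeasure (N x) (B i)) I)"

text \<open>Y is (a version of) the stochastic integral of f against the compensated
  measure N - nu: f is in L2(nu), and Y is the L2(M)-limit of the pathwise
  integrals int f 1_A dN - int f 1_A dnu along every sequence of sets A_n of finite
  nu-measure with f 1_(A_n) \<rightarrow> f in L2(nu).  This agrees with the L2-isometric
  extension from simple functions.\<close>
definition compensated_poisson_integral ::
  "'a measure \<Rightarrow> 'b measure \<Rightarrow> ('a \<Rightarrow> 'b measure) \<Rightarrow> ('b \<Rightarrow> real) \<Rightarrow> ('a \<Rightarrow> real) \<Rightarrow> bool" where
  "compensated_poisson_integral M nu N f Y \<longleftrightarrow>
     f \<in> borel_measurable nu \<and> (\<integral>\<^sup>+ z. ennreal ((f z)\<^sup>2) \<partial>nu) < \<infinity> \<and>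
     Y \<in> borel_measurable M \<and>
     (\<forall>A :: nat \<Rightarrow> 'b set.
        (\<forall>n. A n \<in> sets nu \<and> emeasure nu (A n) < \<infinity>) \<and>
        ((\<lambda>n. \<integral>\<^sup>+ z. ennreal ((f z - f z * indicator (A n) z)\<^sup>2) \<partial>nu) \<longlonglongrightarrow> 0)
        \<longrightarrow>
        ((\<lambda>n. \<integral>\<^sup>+ x. ennreal ((Y x - ((\<integral> z. f z * indicator (A n) z \<partial>(N x))
                                     - (\<integral> z. f z * indicator (A n) z \<partial>nu)))\<^sup>2) \<partial>M)
          \<longlonglongrightarrow> 0))"

end

theory Submission
  imports Defs
begin

lemma pois_sums0:
  fixes l :: real
  shows "(\<lambda>k. l ^ k / fact k) sums exp l"
  using exp_converges[of l] by (simp add: divide_inverse_commute scaleR_conv_of_real)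

lemma fact_aux1: "real (Suc j) * (l ^ Suc j / fact (Suc j)) = (l::real) * (l ^ j / fact j)"
proof -
  have "fact (Suc j) = real (Suc j) * fact j" by simp
  moreover have "real (Suc j) \<noteq> 0" by simp
  ultimately show ?thesis by (simp del: of_nat_Suc fact_Suc)
qed

lemma pois_sums1:
  fixes l :: real
  shows "(\<lambda>k. real k * (l ^ k / fact k)) sums (l * exp l)"
proof -
  have "(\<lambda>j. l * (l ^ j / fact j)) sums (l * exp l)"
    by (intro sums_mult pois_sums0)
  moreover have "(\<lambda>j. real (Suc j) * (l ^ Suc j / fact (Suc j))) = (\<lambda>j. l * (l ^ j / fact j))"
    using fact_aux1 by auto
  ultimately have "(\<lambda>j. real (Suc j) * (l ^ Suc j / fact (Suc j))) sums (l * exp l)" by simp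
  then have "(\<lambda>k. real k * (l ^ k / fact k)) sums (l * exp l + real 0 * (l ^ 0 / fact 0))"
    by (rule sums_Suc[where f="\<lambda>k. real k * (l ^ k / fact k)"])
  then show ?thesis by simp
qed

lemma pois_sums2:
  fixes l :: real
  shows "(\<lambda>k. real k * (real k - 1) * (l ^ k / fact k)) sums (l^2 * exp l)"
proof -
  have "(\<lambda>j. l^2 * (l ^ j / fact j)) sums (l^2 * exp l)"
    by (intro sums_mult pois_sums0)
  moreover have "(\<lambda>j. real (Suc (Suc j)) * (real (Suc (Suc j)) - 1) * (l ^ Suc (Suc j) / fact (Suc (Suc j)))) = (\<lambda>j. l^2 * (l ^ j / fact j))"
  proof
    fix j
    have "real (Suc (Suc j)) * (real (Suc (Suc j)) - 1) * (l ^ Suc (Suc j) / fact (Suc (Suc j)))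
       = real (Suc j) * (real (Suc (Suc j)) * (l ^ Suc (Suc j) / fact (Suc (Suc j))))"
      by (simp add: algebra_simps)
    also have "\<dots> = real (Suc j) * (l * (l ^ Suc j / fact (Suc j)))" by (simp only: fact_aux1)
    also have "\<dots> = l * (real (Suc j) * (l ^ Suc j / fact (Suc j)))" by (simp only: ac_simps)
    also have "\<dots> = l * (l * (l ^ j / fact j))" by (simp only: fact_aux1)
    finally show "real (Suc (Suc j)) * (real (Suc (Suc j)) - 1) * (l ^ Suc (Suc j) / fact (Suc (Suc j))) = l^2 * (l ^ j / fact j)"
      by (simp add: power2_eq_square)
  qed
  ultimately have "(\<lambda>j. real (Suc (Suc j)) * (real (Suc (Suc j)) - 1) * (l ^ Suc (Suc j) / fact (Suc (Suc j)))) sums (l^2 * exp l)" by simp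
  then have "(\<lambda>k. real (Suc k) * (real (Suc k) - 1) * (l ^ Suc k / fact (Suc k))) sums (l^2 * exp l + real (Suc 0) * (real (Suc 0) - 1) * (l ^ Suc 0 / fact (Suc 0)))"
    by (rule sums_Suc[where f="\<lambda>k. real (Suc k) * (real (Suc k) - 1) * (l ^ Suc k / fact (Suc k))"])
  then have "(\<lambda>k. real (Suc k) * (real (Suc k) - 1) * (l ^ Suc k / fact (Suc k))) sums (l^2 * exp l)" by simp
  then have "(\<lambda>k. real k * (real k - 1) * (l ^ k / fact k)) sums (l^2 * exp l + real 0 * (real 0 - 1) * (l ^ 0 / fact 0))"
    by (rule sums_Suc[where f="\<lambda>k. real k * (real k - 1) * (l ^ k / fact k)"])
  then show ?thesis by simp
qed

lemma pois_p_sums: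
  fixes l :: real
  shows "(\<lambda>k. exp (-l) * l ^ k / fact k) sums 1"
    and "(\<lambda>k. real k * (exp (-l) * l ^ k / fact k)) sums l"
    and "(\<lambda>k. (real k)^2 * (exp (-l) * l ^ k / fact k)) sums (l + l^2)"
proof -
  have e: "exp (-l) * exp l = 1" by (simp add: exp_minus)
  have "(\<lambda>k. exp (-l) * (l ^ k / fact k)) sums (exp (-l) * exp l)"
    by (intro sums_mult pois_sums0)
  then show "(\<lambda>k. exp (-l) * l ^ k / fact k) sums 1" using e by simp
  have X1: "(\<lambda>k. exp (-l) * (real k * (l ^ k / fact k))) sums (exp (-l) * (l * exp l))"
    by (intro sums_mult pois_sums1)
  have f1: "(\<lambda>k. exp (-l) * (real k * (l ^ k / fact k))) = (\<lambda>k. real k * (exp (-l) * l ^ k / fact k))"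
    by (rule ext) (simp add: algebra_simps)
  have v1: "exp (-l) * (l * exp l) = l" using e by (simp add: algebra_simps)
  from X1 show s1: "(\<lambda>k. real k * (exp (-l) * l ^ k / fact k)) sums l" unfolding f1 v1 .
  have X2: "(\<lambda>k. exp (-l) * (real k * (real k - 1) * (l ^ k / fact k))) sums (exp (-l) * (l^2 * exp l))"
    by (intro sums_mult pois_sums2)
  have g2: "\<And>A e b c::real. e * (A * (b / c)) = A * (e * b / c)" by simp
  have f2: "(\<lambda>k. exp (-l) * (real k * (real k - 1) * (l ^ k / fact k))) = (\<lambda>k. real k * (real k - 1) * (exp (-l) * l ^ k / fact k))"
    by (rule ext) (rule g2)
  have v2: "exp (-l) * (l^2 * exp l) = l^2" using e by (simp add: algebra_simps)
  from X2 have s2: "(\<lambda>k. real k * (real k - 1) * (exp (-l) * l ^ k / fact k)) sums (l^2)" unfolding f2 v2 .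
  have X3: "(\<lambda>k. real k * (real k - 1) * (exp (-l) * l ^ k / fact k) + real k * (exp (-l) * l ^ k / fact k)) sums (l^2 + l)"
    by (intro sums_add s1 s2)
  have f3: "(\<lambda>k. real k * (real k - 1) * (exp (-l) * l ^ k / fact k) + real k * (exp (-l) * l ^ k / fact k)) = (\<lambda>k. (real k)^2 * (exp (-l) * l ^ k / fact k))"
  proof (rule ext)
    fix k
    have g: "\<And>c::real. real k * (real k - 1) * c + real k * c = (real k)^2 * c"
      by (simp add: algebra_simps power2_eq_square)
    show "real k * (real k - 1) * (exp (-l) * l ^ k / fact k) + real k * (exp (-l) * l ^ k / fact k) = (real k)^2 * (exp (-l) * l ^ k / fact k)"
      by (rule g)
  qed
  from X3 show "(\<lambda>k. (real k)^2 * (exp (-l) * l ^ k / fact k)) sums (l + l^2)" unfolding f3 by (simp add: add.commute)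
qed

locale prm =
  fixes M :: "'a measure" and nu :: "'b measure" and N :: "'a \<Rightarrow> 'b measure"
  assumes PRM: "poisson_random_measure M nu N"
begin

lemmas PRM' = PRM[unfolded poisson_random_measure_def]
lemmas prob_M = PRM'[THEN conjunct1]
lemmas sets_N0 = PRM'[THEN conjunct2, THEN conjunct1]
lemmas N_meas0 = PRM'[THEN conjunct2, THEN conjunct2, THEN conjunct1]
lemmas N_pois0 = PRM'[THEN conjunct2, THEN conjunct2, THEN conjunct2, THEN conjunct1]
lemmas N_inf0 = PRM'[THEN conjunct2, THEN conjunct2, THEN conjunct2, THEN conjunct2, THEN conjunct1]
lemmas N_indep0 = PRM'[THEN conjunct2, THEN conjunct2, THEN conjunct2, THEN conjunct2, THEN conjunct2]

sublocale prob_space M by (rule prob_M)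

lemmas sets_N = sets_N0[rule_format]

lemma space_N: "x \<in> space M \<Longrightarrow> space (N x) = space nu"
  by (rule sets_eq_imp_space_eq[OF sets_N])

lemmas N_meas = N_meas0[rule_format]
lemmas N_pois = N_pois0[rule_format]
lemmas N_inf = N_inf0[rule_format]
lemmas N_indep = N_indep0[rule_format]

definition pk :: "'b set \<Rightarrow> nat \<Rightarrow> real" where
  "pk B k = exp (- enn2real (emeasure nu B)) * enn2real (emeasure nu B) ^ k / fact k"

lemma E_sets: "B \<in> sets nu \<Longrightarrow> {x\<in>space M. emeasure (N x) B = c} \<in> sets M"
proof -
  assume B: "B \<in> sets nu"
  have "{x\<in>space M. emeasure (N x) B = c} = (\<lambda>x. emeasure (N x) B) -` {c} \<inter> space M" by auto
  also have "\<dots> \<in> sets M" by (rule measurable_sets[OF N_meas[OF B]]) simp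
  finally show ?thesis .
qed

lemma N_AE_nat:
  assumes B: "B \<in> sets nu" "emeasure nu B < \<infinity>"
  shows "AE x in M. \<exists>k::nat. emeasure (N x) B = of_nat k"
proof -
  define E where "E k = {x\<in>space M. emeasure (N x) B = of_nat k}" for k::nat
  have Em: "E k \<in> sets M" for k unfolding E_def by (rule E_sets[OF B(1)])
  have dj: "disjoint_family E" by (auto simp: disjoint_family_on_def E_def)
  have "(\<lambda>k. measure M (E k)) sums measure M (\<Union>k. E k)"
    by (rule measure_UNION) (use Em dj in auto)
  moreover have "measure M (E k) = pk B k" for k
    unfolding E_def pk_def by (rule N_pois[OF B])
  ultimately have a: "pk B sums measure M (\<Union>k. E k)" by simp
  have b: "pk B sums 1" unfolding pk_def by (rule pois_p_sums(1))
  have "prob (\<Union>k. E k) = 1" by (rule sums_unique2[OF a b])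
  then have "AE x in M. x \<in> (\<Union>k. E k)" by (rule AE_prob_1)
  then show ?thesis by eventually_elim (auto simp: E_def)
qed

lemma N_nn_int:
  assumes B: "B \<in> sets nu" "emeasure nu B < \<infinity>"
  shows "(\<integral>\<^sup>+ x. g (emeasure (N x) B) \<partial>M) = (\<Sum>k. g (of_nat k) * ennreal (pk B k))"
proof -
  define E where "E k = {x\<in>space M. emeasure (N x) B = of_nat k}" for k::nat
  have Em: "E k \<in> sets M" for k unfolding E_def by (rule E_sets[OF B(1)])
  have "AE x in M. g (emeasure (N x) B) = (\<Sum>k. g (of_nat k) * indicator (E k) x)"
    using N_AE_nat[OF B] AE_space
  proof eventually_elim
    case (elim x)
    from elim obtain m :: nat where m: "emeasure (N x) B = of_nat m" by auto
    have "(\<lambda>k. g (of_nat k) * indicator (E k) x) = (\<lambda>k. if k = m then g (of_nat k) else 0)"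
      using elim m by (auto simp: E_def indicator_def)
    then have "(\<Sum>k. g (of_nat k) * indicator (E k) x) = g (of_nat m)"
      using sums_unique[OF sums_single[of m "\<lambda>k. g (of_nat k)"]] by simp
    then show ?case using m by simp
  qed
  then have "(\<integral>\<^sup>+ x. g (emeasure (N x) B) \<partial>M) = (\<integral>\<^sup>+ x. (\<Sum>k. g (of_nat k) * indicator (E k) x) \<partial>M)"
    by (rule nn_integral_cong_AE)
  also have "\<dots> = (\<Sum>k. \<integral>\<^sup>+ x. g (of_nat k) * indicator (E k) x \<partial>M)"
    by (rule nn_integral_suminf) (use Em in auto)
  also have "\<dots> = (\<Sum>k. g (of_nat k) * emeasure M (E k))"
    using Em by (simp add: nn_integral_cmult_indicator)
  also have "\<dots> = (\<Sum>k. g (of_nat k) * ennreal (pk B k))"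
    using Em by (simp add: emeasure_eq_measure E_def pk_def N_pois[OF B])
  finally show ?thesis .
qed

lemma pk_nonneg: "0 \<le> pk B k"
  unfolding pk_def by simp

lemma N_real_moment:
  assumes B: "B \<in> sets nu" "emeasure nu B < \<infinity>"
    and h: "h \<in> borel_measurable borel" "\<And>k. 0 \<le> h (of_nat k)"
    and s: "(\<lambda>k. h (of_nat k) * pk B k) sums s"
  shows "integrable M (\<lambda>x. h (emeasure (N x) B))" "(\<integral>x. h (emeasure (N x) B) \<partial>M) = s"
proof -
  have meas: "(\<lambda>x. h (emeasure (N x) B)) \<in> borel_measurable M"
    using measurable_compose[OF N_meas[OF B(1)] h(1)] by (simp add: comp_def)
  have nn: "AE x in M. 0 \<le> h (emeasure (N x) B)"
    using N_AE_nat[OF B] by eventually_elim (use h(2) in auto)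
  have "(\<integral>\<^sup>+ x. ennreal (h (emeasure (N x) B)) \<partial>M) = (\<Sum>k. ennreal (h (of_nat k)) * ennreal (pk B k))"
    by (rule N_nn_int[OF B, of "\<lambda>y. ennreal (h y)"])
  also have "\<dots> = (\<Sum>k. ennreal (h (of_nat k) * pk B k))"
  proof -
    have "\<And>k. ennreal (h (of_nat k)) * ennreal (pk B k) = ennreal (h (of_nat k) * pk B k)"
      by (rule ennreal_mult[symmetric]) (rule h(2), rule pk_nonneg)
    then show ?thesis by (simp only:)
  qed
  also have "\<dots> = ennreal s"
  proof -
    have "(\<Sum>k. ennreal (h (of_nat k) * pk B k)) = ennreal (\<Sum>k. h (of_nat k) * pk B k)"
      by (rule suminf_ennreal2) (use h(2) pk_nonneg s in \<open>auto intro: mult_nonneg_nonneg simp: sums_iff\<close>)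
    also have "(\<Sum>k. h (of_nat k) * pk B k) = s" using s by (rule sums_unique[symmetric])
    finally show ?thesis .
  qed
  finally have I: "(\<integral>\<^sup>+ x. ennreal (h (emeasure (N x) B)) \<partial>M) = ennreal s" .
  show int: "integrable M (\<lambda>x. h (emeasure (N x) B))"
    by (rule integrableI_nonneg[OF meas nn]) (simp only: I infinity_ennreal_def ennreal_less_top)
  have s0: "0 \<le> s"
  proof -
    have "summable (\<lambda>k. h (of_nat k) * pk B k)" using s by (rule sums_summable)
    then have "0 \<le> (\<Sum>k. h (of_nat k) * pk B k)"
      by (rule suminf_nonneg) (intro mult_nonneg_nonneg h(2) pk_nonneg)
    then show ?thesis using sums_unique[OF s] by simp
  qed
  have "ennreal (\<integral>x. h (emeasure (N x) B) \<partial>M) = ennreal s"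
    using nn_integral_eq_integral[OF int nn] I by simp
  then show "(\<integral>x. h (emeasure (N x) B) \<partial>M) = s"
    using s0 integral_nonneg_AE[OF nn] by simp
qed

end

lemma disj_sum_fun:
  fixes c :: "'i \<Rightarrow> real" and F :: "real \<Rightarrow> real"
  assumes I: "finite I" and dj: "disjoint_family_on B I" and F0: "F 0 = 0"
  shows "F (\<Sum>i\<in>I. c i * indicator (B i) z) = (\<Sum>i\<in>I. F (c i) * indicator (B i) z)"
proof (cases "\<exists>j\<in>I. z \<in> B j")
  case True
  then obtain j where j: "j \<in> I" "z \<in> B j" by blast
  have ind: "indicator (B i) z = (if i = j then 1 else 0 :: real)" if "i \<in> I" for i
    using dj j that by (auto simp: disjoint_family_on_def indicator_def)
  have "(\<Sum>i\<in>I. c i * indicator (B i) z) = (\<Sum>i\<in>I. if i = j then c i else 0)"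
    by (rule sum.cong) (auto simp: ind)
  also have "\<dots> = c j" using I j by simp
  finally have L: "(\<Sum>i\<in>I. c i * indicator (B i) z) = c j" .
  have "(\<Sum>i\<in>I. F (c i) * indicator (B i) z) = (\<Sum>i\<in>I. if i = j then F (c i) else 0)"
    by (rule sum.cong) (auto simp: ind)
  also have "\<dots> = F (c j)" using I j by simp
  finally show ?thesis using L by simp
next
  case False
  then have "\<And>i. i \<in> I \<Longrightarrow> indicator (B i) z = (0::real)" by (auto simp: indicator_def)
  then show ?thesis using F0 by simp
qed

lemma ind_sum_int:
  fixes c :: "'i \<Rightarrow> real"
  assumes I: "finite I" and B: "\<And>i. i \<in> I \<Longrightarrow> B i \<in> sets Q" "\<And>i. i \<in> I \<Longrightarrow> emeasure Q (B i) < \<infinity>"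
  shows "integrable Q (\<lambda>z. \<Sum>i\<in>I. c i * indicator (B i) z)"
    and "(\<integral>z. (\<Sum>i\<in>I. c i * indicator (B i) z) \<partial>Q) = (\<Sum>i\<in>I. c i * measure Q (B i))"
proof -
  have int: "integrable Q (\<lambda>z. c i * indicator (B i) z)" if "i \<in> I" for i
    using B[OF that] by (intro integrable_mult_right integrable_real_indicator)
  then show "integrable Q (\<lambda>z. \<Sum>i\<in>I. c i * indicator (B i) z)" by (intro Bochner_Integration.integrable_sum)
  have "(\<integral>z. (\<Sum>i\<in>I. c i * indicator (B i) z) \<partial>Q) = (\<Sum>i\<in>I. \<integral>z. c i * indicator (B i) z \<partial>Q)"
    by (rule Bochner_Integration.integral_sum) (rule int)
  also have "\<dots> = (\<Sum>i\<in>I. c i * measure Q (B i))"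
  proof (rule sum.cong[OF refl])
    fix i assume i: "i \<in> I"
    have "B i \<inter> space Q = B i" using B(1)[OF i] sets.sets_into_space by blast
    then show "(\<integral>z. c i * indicator (B i) z \<partial>Q) = c i * measure Q (B i)"
      by simp
  qed
  finally show "(\<integral>z. (\<Sum>i\<in>I. c i * indicator (B i) z) \<partial>Q) = (\<Sum>i\<in>I. c i * measure Q (B i))" .
qed

lemma ennreal_mult_indicator: "0 \<le> a \<Longrightarrow> ennreal (a * indicator A z) = ennreal a * indicator A z"
  by (cases "z \<in> A") (simp_all add: indicator_def)

lemma ind_sum_nn:
  fixes a :: "'i \<Rightarrow> real"
  assumes I: "finite I" and B: "\<And>i. i \<in> I \<Longrightarrow> B i \<in> sets Q" and a: "\<And>i. i \<in> I \<Longrightarrow> 0 \<le> a i"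
  shows "(\<integral>\<^sup>+z. ennreal (\<Sum>i\<in>I. a i * indicator (B i) z) \<partial>Q) = (\<Sum>i\<in>I. ennreal (a i) * emeasure Q (B i))"
proof -
  have "\<And>z. ennreal (\<Sum>i\<in>I. a i * indicator (B i) z) = (\<Sum>i\<in>I. ennreal (a i) * indicator (B i) z)"
  proof -
    fix z
    have "ennreal (\<Sum>i\<in>I. a i * indicator (B i) z) = (\<Sum>i\<in>I. ennreal (a i * indicator (B i) z))"
      by (rule sum_ennreal[symmetric]) (use a in auto)
    also have "\<dots> = (\<Sum>i\<in>I. ennreal (a i) * indicator (B i) z)"
      by (rule sum.cong[OF refl]) (rule ennreal_mult_indicator[OF a])
    finally show "ennreal (\<Sum>i\<in>I. a i * indicator (B i) z) = (\<Sum>i\<in>I. ennreal (a i) * indicator (B i) z)" .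
  qed
  then have "(\<integral>\<^sup>+z. ennreal (\<Sum>i\<in>I. a i * indicator (B i) z) \<partial>Q) = (\<integral>\<^sup>+z. (\<Sum>i\<in>I. ennreal (a i) * indicator (B i) z) \<partial>Q)"
    by (simp only:)
  also have "\<dots> = (\<Sum>i\<in>I. \<integral>\<^sup>+z. ennreal (a i) * indicator (B i) z \<partial>Q)"
    by (rule nn_integral_sum) (use B in auto)
  also have "\<dots> = (\<Sum>i\<in>I. ennreal (a i) * emeasure Q (B i))"
    by (rule sum.cong[OF refl]) (rule nn_integral_cmult_indicator[OF B])
  finally show ?thesis .
qed

context prm
begin

lemma N_mean: assumes B: "B \<in> sets nu" shows "(\<integral>\<^sup>+ x. emeasure (N x) B \<partial>M) = emeasure nu B"
proof (cases "emeasure nu B < \<infinity>")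
  case True
  have "(\<integral>\<^sup>+ x. emeasure (N x) B \<partial>M) = (\<Sum>k. (\<lambda>y. y) (of_nat k) * ennreal (pk B k))"
    by (rule N_nn_int[OF B True])
  also have "\<dots> = (\<Sum>k. ennreal (real k * pk B k))"
  proof -
    have "\<And>k. (of_nat k :: ennreal) * ennreal (pk B k) = ennreal (real k * pk B k)"
      by (subst ennreal_of_nat_eq_real_of_nat) (rule ennreal_mult[symmetric], simp, rule pk_nonneg)
    then show ?thesis by (simp only:)
  qed
  also have "\<dots> = ennreal (\<Sum>k. real k * pk B k)"
    by (rule suminf_ennreal2) (use pois_p_sums(2) in \<open>auto simp: pk_def sums_iff intro: pk_nonneg\<close>)
  also have "(\<Sum>k. real k * pk B k) = enn2real (emeasure nu B)"
    unfolding pk_def by (rule sums_unique[symmetric]) (rule pois_p_sums(2))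
  also have "ennreal (enn2real (emeasure nu B)) = emeasure nu B"
    using True by (intro ennreal_enn2real) (simp only: infinity_ennreal_def)
  finally show ?thesis .
next
  case False
  then have inf: "emeasure nu B = \<infinity>" by (simp only: not_less top_unique infinity_ennreal_def)
  have "AE x in M. emeasure (N x) B = \<infinity>" by (rule N_inf[OF B inf])
  then have "(\<integral>\<^sup>+ x. emeasure (N x) B \<partial>M) = (\<integral>\<^sup>+ x. \<infinity> \<partial>M)" by (rule nn_integral_cong_AE)
  also have "\<dots> = \<infinity>" by (simp add: emeasure_space_1)
  finally show ?thesis using inf by simp
qed

lemma N_D:
  assumes B: "B \<in> sets nu" "emeasure nu B < \<infinity>"
  defines "l \<equiv> enn2real (emeasure nu B)"
  shows "integrable M (\<lambda>x. enn2real (emeasure (N x) B) - l)"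
    and "(\<integral>x. enn2real (emeasure (N x) B) - l \<partial>M) = 0"
    and "integrable M (\<lambda>x. (enn2real (emeasure (N x) B) - l)^2)"
    and "(\<integral>x. (enn2real (emeasure (N x) B) - l)^2 \<partial>M) = l"
proof -
  have pk: "pk B k = exp (- l) * l ^ k / fact k" for k unfolding pk_def l_def ..
  have s1: "(\<lambda>k. enn2real (of_nat k :: ennreal) * pk B k) sums l"
    using pois_p_sums(2)[of l] by (simp add: pk)
  have m1: "integrable M (\<lambda>x. enn2real (emeasure (N x) B))"
    and e1: "(\<integral>x. enn2real (emeasure (N x) B) \<partial>M) = l"
    by (rule N_real_moment[OF B _ _ s1]; (measurable | simp))+
  show i1: "integrable M (\<lambda>x. enn2real (emeasure (N x) B) - l)"
    using m1 by simp
  show "(\<integral>x. enn2real (emeasure (N x) B) - l \<partial>M) = 0"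
    using m1 e1 by (simp add: prob_space)
  have s2: "(\<lambda>k. (enn2real (of_nat k :: ennreal) - l)^2 * pk B k) sums l"
  proof -
    have a: "(\<lambda>k. (real k)^2 * pk B k) sums (l + l^2)" using pois_p_sums(3)[of l] by (simp add: pk)
    have b: "(\<lambda>k. 2 * l * (real k * pk B k)) sums (2 * l * l)"
      by (rule sums_mult) (use pois_p_sums(2)[of l] in \<open>simp add: pk\<close>)
    have c: "(\<lambda>k. l^2 * pk B k) sums (l^2 * 1)"
      by (rule sums_mult) (use pois_p_sums(1)[of l] in \<open>simp add: pk\<close>)
    have "(\<lambda>k. (real k)^2 * pk B k - 2 * l * (real k * pk B k) + l^2 * pk B k) sums ((l + l^2) - 2 * l * l + l^2 * 1)"
      by (intro sums_add sums_diff a b c)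
    moreover have "(l + l^2) - 2 * l * l + l^2 * 1 = l" by (simp add: power2_eq_square)
    moreover have "\<And>k. (real k)^2 * pk B k - 2 * l * (real k * pk B k) + l^2 * pk B k = (enn2real (of_nat k :: ennreal) - l)^2 * pk B k"
      by (simp add: power2_eq_square algebra_simps)
    ultimately show ?thesis by simp
  qed
  show "integrable M (\<lambda>x. (enn2real (emeasure (N x) B) - l)^2)"
    and "(\<integral>x. (enn2real (emeasure (N x) B) - l)^2 \<partial>M) = l"
    by (rule N_real_moment[where h="\<lambda>y. (enn2real y - l)^2", OF B _ _ s2]; (measurable | simp))+
qed

end

context prm
begin

lemma simple_var:
  fixes c :: "nat \<Rightarrow> real"
  assumes I: "finite I" and dj: "disjoint_family_on B I"
    and B: "\<And>i. i \<in> I \<Longrightarrow> B i \<in> sets nu" "\<And>i. i \<in> I \<Longrightarrow> emeasure nu (B i) < \<infinity>"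
  shows "(\<integral>\<^sup>+ x. ennreal ((\<Sum>i\<in>I. c i * (enn2real (emeasure (N x) (B i)) - enn2real (emeasure nu (B i))))^2) \<partial>M)
     = ennreal (\<Sum>i\<in>I. (c i)^2 * enn2real (emeasure nu (B i)))"
proof -
  define D where "D i x = enn2real (emeasure (N x) (B i)) - enn2real (emeasure nu (B i))" for i x
  define l where "l i = enn2real (emeasure nu (B i))" for i
  have Dint: "integrable M (D i)" and D0: "integral\<^sup>L M (D i) = 0"
    and D2int: "integrable M (\<lambda>x. D i x * D i x)" and D2: "(\<integral>x. D i x * D i x \<partial>M) = l i"
    if "i \<in> I" for i
    using N_D[OF B(1)[OF that] B(2)[OF that]] unfolding D_def l_def power2_eq_square by auto
  have indep: "indep_vars (\<lambda>_. borel) D I"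
  proof -
    have "indep_vars (\<lambda>_. borel) (\<lambda>i x. (\<lambda>y. enn2real y - enn2real (emeasure nu (B i))) (emeasure (N x) (B i))) I"
      by (rule indep_vars_compose2[OF N_indep[OF I B(1) dj]]) measurable
    then show ?thesis unfolding D_def .
  qed
  have cross: "integrable M (\<lambda>x. D i x * D j x) \<and> (\<integral>x. D i x * D j x \<partial>M) = 0"
    if ij: "i \<in> I" "j \<in> I" "i \<noteq> j" for i j
  proof -
    have ind2: "indep_vars (\<lambda>_. borel) D {i, j}" by (rule indep_vars_subset[OF indep]) (use ij in auto)
    have pr: "(\<lambda>x. \<Prod>k\<in>{i, j}. D k x) = (\<lambda>x. D i x * D j x)" using ij by auto
    have int2: "\<And>k. k \<in> {i, j} \<Longrightarrow> integrable M (D k)" using Dint ij by auto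
    have "integrable M (\<lambda>x. \<Prod>k\<in>{i, j}. D k x)" by (rule indep_vars_integrable[OF _ ind2 int2]) simp
    moreover have "(\<integral>x. (\<Prod>k\<in>{i, j}. D k x) \<partial>M) = (\<Prod>k\<in>{i, j}. integral\<^sup>L M (D k))"
      by (rule indep_vars_lebesgue_integral[OF _ ind2 int2]) simp
    moreover have "(\<Prod>k\<in>{i, j}. integral\<^sup>L M (D k)) = 0" using D0 ij by simp
    ultimately show ?thesis unfolding pr by simp
  qed
  have pint: "integrable M (\<lambda>x. D i x * D j x)" if "i \<in> I" "j \<in> I" for i j
    using cross[OF that] D2int[OF that(1)] by (cases "i = j") auto
  have pval: "(\<integral>x. D i x * D j x \<partial>M) = (if i = j then l i else 0)" if "i \<in> I" "j \<in> I" for i j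
    using cross[OF that] D2[OF that(1)] by (cases "i = j") auto
  have sq: "(\<Sum>i\<in>I. c i * D i x)^2 = (\<Sum>i\<in>I. \<Sum>j\<in>I. c i * c j * (D i x * D j x))" for x
    unfolding power2_eq_square sum_product by (rule sum.cong[OF refl], rule sum.cong[OF refl]) (simp only: ac_simps)
  have sqint: "integrable M (\<lambda>x. (\<Sum>i\<in>I. c i * D i x)^2)"
    unfolding sq by (intro Bochner_Integration.integrable_sum integrable_mult_right pint)
  have "(\<integral>x. (\<Sum>i\<in>I. c i * D i x)^2 \<partial>M) = (\<integral>x. (\<Sum>i\<in>I. \<Sum>j\<in>I. c i * c j * (D i x * D j x)) \<partial>M)"
    unfolding sq ..
  also have "\<dots> = (\<Sum>i\<in>I. \<integral>x. (\<Sum>j\<in>I. c i * c j * (D i x * D j x)) \<partial>M)"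
    by (rule Bochner_Integration.integral_sum) (intro Bochner_Integration.integrable_sum integrable_mult_right pint)
  also have "\<dots> = (\<Sum>i\<in>I. \<Sum>j\<in>I. \<integral>x. c i * c j * (D i x * D j x) \<partial>M)"
    by (rule sum.cong[OF refl], rule Bochner_Integration.integral_sum) (intro integrable_mult_right pint)
  also have "\<dots> = (\<Sum>i\<in>I. \<Sum>j\<in>I. c i * c j * (\<integral>x. D i x * D j x \<partial>M))"
    by (rule sum.cong[OF refl], rule sum.cong[OF refl]) (rule integral_mult_right_zero)
  also have "\<dots> = (\<Sum>i\<in>I. \<Sum>j\<in>I. if j = i then c i * c i * l i else 0)"
    by (rule sum.cong[OF refl], rule sum.cong[OF refl]) (simp add: pval)
  also have "\<dots> = (\<Sum>i\<in>I. (c i)^2 * l i)"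
    using I by (simp add: power2_eq_square)
  finally have R: "(\<integral>x. (\<Sum>i\<in>I. c i * D i x)^2 \<partial>M) = (\<Sum>i\<in>I. (c i)^2 * l i)" .
  have "(\<integral>\<^sup>+ x. ennreal ((\<Sum>i\<in>I. c i * D i x)^2) \<partial>M) = ennreal (\<integral>x. (\<Sum>i\<in>I. c i * D i x)^2 \<partial>M)"
    by (rule nn_integral_eq_integral[OF sqint]) simp
  also have "\<dots> = ennreal (\<Sum>i\<in>I. (c i)^2 * l i)" by (simp only: R)
  finally show ?thesis unfolding D_def l_def .
qed

end

lemma simple_repr:
  fixes s :: "'b \<Rightarrow> real"
  assumes s: "simple_function Q s" and fin: "(\<integral>\<^sup>+z. ennreal \<bar>s z\<bar> \<partial>Q) < \<infinity>"
  shows "\<exists>(I::nat set) B c. finite I \<and> disjoint_family_on B I \<and> (\<forall>i\<in>I. B i \<in> sets Q \<and> emeasure Q (B i) < \<infinity>)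
      \<and> (\<forall>z\<in>space Q. s z = (\<Sum>i\<in>I. c i * indicator (B i) z))"
proof -
  define V where "V = s ` space Q - {0}"
  have fV: "finite V" using simple_functionD(1)[OF s] unfolding V_def by simp
  obtain e where e: "bij_betw e {0..<card V} V" using ex_bij_betw_nat_finite[OF fV] by blast
  define B where "B i = s -` {e i} \<inter> space Q" for i
  have Bs: "B i \<in> sets Q" for i unfolding B_def by (rule simple_functionD(2)[OF s])
  have eV: "e i \<in> V" if "i \<in> {0..<card V}" for i using e that by (auto simp: bij_betw_def)
  have einj: "inj_on e {0..<card V}" using e by (simp add: bij_betw_def)
  have ne: "e i \<noteq> 0" if "i \<in> {0..<card V}" for i using eV[OF that] by (simp add: V_def)
  have dj: "disjoint_family_on B {0..<card V}"
    unfolding disjoint_family_on_def B_def using einj by (auto simp: inj_on_def)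
  have fin_i: "emeasure Q (B i) < \<infinity>" if i: "i \<in> {0..<card V}" for i
  proof -
    have "ennreal \<bar>e i\<bar> * emeasure Q (B i) = (\<integral>\<^sup>+z. ennreal \<bar>e i\<bar> * indicator (B i) z \<partial>Q)"
      by (rule nn_integral_cmult_indicator[OF Bs, symmetric])
    also have "\<dots> \<le> (\<integral>\<^sup>+z. ennreal \<bar>s z\<bar> \<partial>Q)"
      by (rule nn_integral_mono) (auto simp: B_def indicator_def)
    also note fin
    finally have "ennreal \<bar>e i\<bar> * emeasure Q (B i) < top" by (simp only: infinity_ennreal_def)
    then have "ennreal \<bar>e i\<bar> = 0 \<or> emeasure Q (B i) = 0 \<or> (ennreal \<bar>e i\<bar> < top \<and> emeasure Q (B i) < top)"
      by (simp only: ennreal_mult_less_top)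
    moreover have "ennreal \<bar>e i\<bar> \<noteq> 0" using ne[OF i] by simp
    ultimately have "emeasure Q (B i) = 0 \<or> emeasure Q (B i) < top" by blast
    then show ?thesis using ennreal_zero_less_top by (auto simp only: infinity_ennreal_def)
  qed
  have rep: "s z = (\<Sum>i\<in>{0..<card V}. e i * indicator (B i) z)" if z: "z \<in> space Q" for z
  proof (cases "s z = 0")
    case True
    have "\<And>i. i \<in> {0..<card V} \<Longrightarrow> e i * indicator (B i) z = 0"
      using ne True by (auto simp: B_def indicator_def)
    then have "(\<Sum>i\<in>{0..<card V}. e i * indicator (B i) z) = 0" by (intro sum.neutral ballI)
    then show ?thesis using True by simp
  next
    case False
    then have "s z \<in> V" using z by (simp add: V_def)
    then obtain j where j: "j \<in> {0..<card V}" "e j = s z"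
      using e by (metis bij_betw_def imageE)
    have "\<And>i. i \<in> {0..<card V} \<Longrightarrow> e i * indicator (B i) z = (if i = j then e i else 0)"
      using j einj z by (auto simp: B_def indicator_def inj_on_def)
    then have "(\<Sum>i\<in>{0..<card V}. e i * indicator (B i) z) = (\<Sum>i\<in>{0..<card V}. if i = j then e i else 0)"
      by (rule sum.cong[OF refl])
    also have "\<dots> = e j" using j by simp
    finally show ?thesis using j by simp
  qed
  show ?thesis
    by (rule exI[of _ "{0..<card V}"], rule exI[of _ B], rule exI[of _ e]) (use dj Bs fin_i rep in auto)
qed

context prm
begin

lemma simple_N:
  fixes c :: "nat \<Rightarrow> real"
  assumes I: "finite I" and B: "\<forall>i\<in>I. B i \<in> sets nu" and x: "x \<in> space M"
    and Nf: "\<forall>i\<in>I. emeasure (N x) (B i) < \<infinity>"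
    and rep: "\<forall>z\<in>space nu. s z = (\<Sum>i\<in>I. c i * indicator (B i) z)"
  shows "integrable (N x) s" "(\<integral>z. s z \<partial>N x) = (\<Sum>i\<in>I. c i * enn2real (emeasure (N x) (B i)))"
proof -
  have sp: "space (N x) = space nu" by (rule space_N[OF x])
  have BN: "\<And>i. i \<in> I \<Longrightarrow> B i \<in> sets (N x)" using B sets_N[OF x] by auto
  have Nf': "\<And>i. i \<in> I \<Longrightarrow> emeasure (N x) (B i) < \<infinity>" using Nf by auto
  have eq: "integrable (N x) s \<longleftrightarrow> integrable (N x) (\<lambda>z. \<Sum>i\<in>I. c i * indicator (B i) z)"
    by (rule Bochner_Integration.integrable_cong[OF refl]) (use rep sp in auto)
  show "integrable (N x) s" unfolding eq by (rule ind_sum_int(1)[OF I BN Nf'])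
  have "(\<integral>z. s z \<partial>N x) = (\<integral>z. (\<Sum>i\<in>I. c i * indicator (B i) z) \<partial>N x)"
    by (rule Bochner_Integration.integral_cong[OF refl]) (use rep sp in auto)
  also have "\<dots> = (\<Sum>i\<in>I. c i * measure (N x) (B i))" by (rule ind_sum_int(2)[OF I BN Nf'])
  finally show "(\<integral>z. s z \<partial>N x) = (\<Sum>i\<in>I. c i * enn2real (emeasure (N x) (B i)))"
    by (simp add: measure_def)
qed

end

context prm
begin

lemma Wmeas:
  fixes c :: "nat \<Rightarrow> real"
  assumes "finite J" "\<And>j. j \<in> J \<Longrightarrow> Bj j \<in> sets nu"
  shows "(\<lambda>x. \<Sum>j\<in>J. c j * enn2real (emeasure (N x) (Bj j))) \<in> borel_measurable M"
proof (rule borel_measurable_sum)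
  fix j assume "j \<in> J"
  then have m: "(\<lambda>x. emeasure (N x) (Bj j)) \<in> borel_measurable M" by (intro N_meas assms(2))
  show "(\<lambda>x. c j * enn2real (emeasure (N x) (Bj j))) \<in> borel_measurable M"
    using m by measurable
qed

lemma Umeas:
  fixes c :: "nat \<Rightarrow> real"
  assumes "finite J" "\<And>j. j \<in> J \<Longrightarrow> Bj j \<in> sets nu"
  shows "(\<lambda>x. \<Sum>j\<in>J. ennreal (c j) * emeasure (N x) (Bj j)) \<in> borel_measurable M"
proof (rule borel_measurable_sum)
  fix j assume "j \<in> J"
  then have m: "(\<lambda>x. emeasure (N x) (Bj j)) \<in> borel_measurable M" by (intro N_meas assms(2))
  show "(\<lambda>x. ennreal (c j) * emeasure (N x) (Bj j)) \<in> borel_measurable M"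
    using m by measurable
qed


lemma KL:
  assumes hm: "h \<in> borel_measurable nu" and h1: "(\<integral>\<^sup>+z. ennreal \<bar>h z\<bar> \<partial>nu) < \<infinity>"
    and h2: "(\<integral>\<^sup>+z. ennreal ((h z)^2) \<partial>nu) < \<infinity>"
  shows "AE x in M. integrable (N x) h"
    and "\<exists>G\<in>borel_measurable M. (AE x in M. G x = (\<integral>z. h z \<partial>N x)) \<and>
          (\<integral>\<^sup>+x. ennreal ((G x - (\<integral>z. h z \<partial>nu))^2) \<partial>M) \<le> 4 * (\<integral>\<^sup>+z. ennreal ((h z)^2) \<partial>nu)"
proof -
  obtain F where F: "\<forall>i. simple_function nu (F i)" "\<forall>x\<in>space nu. (\<lambda>i. F i x) \<longlonglongrightarrow> h x"
      "\<forall>i. \<forall>x\<in>space nu. dist (F i x) 0 \<le> 2 * dist (h x) 0"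
    using borel_measurable_implies_sequence_metric[OF hm, of 0] by blast
  have Fs: "simple_function nu (F i)" for i using F(1) by blast
  have Flim: "(\<lambda>i. F i z) \<longlonglongrightarrow> h z" if "z \<in> space nu" for z using F(2) that by blast
  have Fb: "\<bar>F i z\<bar> \<le> 2 * \<bar>h z\<bar>" if "z \<in> space nu" for i z using F(3) that by (simp add: dist_real_def)
  have Fm: "F i \<in> borel_measurable nu" for i using Fs by (rule borel_measurable_simple_function)
  have habs: "(\<lambda>z. ennreal \<bar>h z\<bar>) \<in> borel_measurable nu" using hm by measurable
  have hsq: "(\<lambda>z. ennreal ((h z)^2)) \<in> borel_measurable nu" using hm by measurable
  have F1: "(\<integral>\<^sup>+z. ennreal \<bar>F i z\<bar> \<partial>nu) \<le> 2 * (\<integral>\<^sup>+z. ennreal \<bar>h z\<bar> \<partial>nu)" for i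
  proof -
    have "(\<integral>\<^sup>+z. ennreal \<bar>F i z\<bar> \<partial>nu) \<le> (\<integral>\<^sup>+z. 2 * ennreal \<bar>h z\<bar> \<partial>nu)"
    proof (rule nn_integral_mono)
      fix z assume z: "z \<in> space nu"
      have "ennreal \<bar>F i z\<bar> \<le> ennreal (2 * \<bar>h z\<bar>)" by (rule ennreal_leI) (rule Fb[OF z])
      also have "ennreal (2 * \<bar>h z\<bar>) = 2 * ennreal \<bar>h z\<bar>" by (simp add: ennreal_mult)
      finally show "ennreal \<bar>F i z\<bar> \<le> 2 * ennreal \<bar>h z\<bar>" .
    qed
    also have "\<dots> = 2 * (\<integral>\<^sup>+z. ennreal \<bar>h z\<bar> \<partial>nu)" by (rule nn_integral_cmult[OF habs])
    finally show ?thesis .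
  qed
  have two_fin: "2 * (\<integral>\<^sup>+z. ennreal \<bar>h z\<bar> \<partial>nu) < \<infinity>"
    using h1 by (simp add: ennreal_mult_less_top)
  have F1fin: "(\<integral>\<^sup>+z. ennreal \<bar>F i z\<bar> \<partial>nu) < \<infinity>" for i
    using F1[of i] two_fin by (rule le_less_trans)
  have "\<forall>i. \<exists>(I::nat set) B c. finite I \<and> disjoint_family_on B I \<and> (\<forall>j\<in>I. B j \<in> sets nu \<and> emeasure nu (B j) < \<infinity>)
      \<and> (\<forall>z\<in>space nu. F i z = (\<Sum>j\<in>I. c j * indicator (B j) z))"
    by (intro allI) (rule simple_repr[OF Fs F1fin])
  from choice[OF this] obtain I :: "nat \<Rightarrow> nat set" where "\<forall>i. \<exists>B c. finite (I i) \<and> disjoint_family_on B (I i) \<and> (\<forall>j\<in>I i. B j \<in> sets nu \<and> emeasure nu (B j) < \<infinity>)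
      \<and> (\<forall>z\<in>space nu. F i z = (\<Sum>j\<in>I i. c j * indicator (B j) z))" by blast
  from choice[OF this] obtain B :: "nat \<Rightarrow> nat \<Rightarrow> 'b set" where "\<forall>i. \<exists>c. finite (I i) \<and> disjoint_family_on (B i) (I i) \<and> (\<forall>j\<in>I i. B i j \<in> sets nu \<and> emeasure nu (B i j) < \<infinity>)
      \<and> (\<forall>z\<in>space nu. F i z = (\<Sum>j\<in>I i. c j * indicator (B i j) z))" by blast
  from choice[OF this] obtain c :: "nat \<Rightarrow> nat \<Rightarrow> real" where IBc: "\<forall>i. finite (I i) \<and> disjoint_family_on (B i) (I i) \<and> (\<forall>j\<in>I i. B i j \<in> sets nu \<and> emeasure nu (B i j) < \<infinity>)
      \<and> (\<forall>z\<in>space nu. F i z = (\<Sum>j\<in>I i. c i j * indicator (B i j) z))" by blast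
  have I: "finite (I i)" for i using IBc by blast
  have dj: "disjoint_family_on (B i) (I i)" for i using IBc by blast
  have Bs: "B i j \<in> sets nu" if "j \<in> I i" for i j using IBc that by blast
  have Bf: "emeasure nu (B i j) < \<infinity>" if "j \<in> I i" for i j using IBc that by blast
  have rep: "F i z = (\<Sum>j\<in>I i. c i j * indicator (B i j) z)" if "z \<in> space nu" for i z using IBc that by blast

  have AEfin: "AE x in M. \<forall>i. \<forall>j\<in>I i. emeasure (N x) (B i j) < \<infinity>"
  proof -
    have "AE x in M. emeasure (N x) (B i j) < \<infinity>" if "j \<in> I i" for i j
      using N_AE_nat[OF Bs[OF that] Bf[OF that]]
      by eventually_elim (metis of_nat_less_top infinity_ennreal_def)
    then show ?thesis
      by (subst AE_all_countable) (intro allI AE_finite_allI[OF I])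
  qed

  define W where "W i x = (\<Sum>j\<in>I i. c i j * enn2real (emeasure (N x) (B i j)))" for i x
  define a where "a i = (\<Sum>j\<in>I i. c i j * enn2real (emeasure nu (B i j)))" for i
  have Wm: "W i \<in> borel_measurable M" for i
    unfolding W_def by (rule Wmeas[OF I Bs])

  have Fsq: "(F i z)^2 = (\<Sum>j\<in>I i. (c i j)^2 * indicator (B i j) z)" if "z \<in> space nu" for i z
    unfolding rep[OF that] by (rule disj_sum_fun[OF I dj, of "\<lambda>y. y^2"]) simp
  have Fabs: "\<bar>F i z\<bar> = (\<Sum>j\<in>I i. \<bar>c i j\<bar> * indicator (B i j) z)" if "z \<in> space nu" for i z
    unfolding rep[OF that] by (rule disj_sum_fun[OF I dj, of "\<lambda>y. \<bar>y\<bar>"]) simp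

  have Wvar: "(\<integral>\<^sup>+x. ennreal ((W i x - a i)^2) \<partial>M) = (\<integral>\<^sup>+z. ennreal ((F i z)^2) \<partial>nu)" for i
  proof -
    have e1: "W i x - a i = (\<Sum>j\<in>I i. c i j * (enn2real (emeasure (N x) (B i j)) - enn2real (emeasure nu (B i j))))" for x
      unfolding W_def a_def by (simp add: sum_subtractf right_diff_distrib)
    have "(\<integral>\<^sup>+x. ennreal ((W i x - a i)^2) \<partial>M) = ennreal (\<Sum>j\<in>I i. (c i j)^2 * enn2real (emeasure nu (B i j)))"
      unfolding e1 by (rule simple_var[OF I dj Bs Bf])
    also have "\<dots> = (\<Sum>j\<in>I i. ennreal ((c i j)^2) * emeasure nu (B i j))"
    proof -
      have "ennreal (\<Sum>j\<in>I i. (c i j)^2 * enn2real (emeasure nu (B i j))) = (\<Sum>j\<in>I i. ennreal ((c i j)^2 * enn2real (emeasure nu (B i j))))"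
        by (rule sum_ennreal[symmetric]) simp
      also have "\<dots> = (\<Sum>j\<in>I i. ennreal ((c i j)^2) * emeasure nu (B i j))"
      proof (rule sum.cong[OF refl])
        fix j assume j: "j \<in> I i"
        have "ennreal ((c i j)^2 * enn2real (emeasure nu (B i j))) = ennreal ((c i j)^2) * ennreal (enn2real (emeasure nu (B i j)))"
          by (rule ennreal_mult) simp_all
        also have "ennreal (enn2real (emeasure nu (B i j))) = emeasure nu (B i j)"
          using Bf[OF j] by (intro ennreal_enn2real) (simp only: infinity_ennreal_def)
        finally show "ennreal ((c i j)^2 * enn2real (emeasure nu (B i j))) = ennreal ((c i j)^2) * emeasure nu (B i j)" .
      qed
      finally show ?thesis .
    qed
    also have "\<dots> = (\<integral>\<^sup>+z. ennreal (\<Sum>j\<in>I i. (c i j)^2 * indicator (B i j) z) \<partial>nu)"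
      by (rule ind_sum_nn[symmetric]) (use Bs I in auto)
    also have "\<dots> = (\<integral>\<^sup>+z. ennreal ((F i z)^2) \<partial>nu)"
      by (rule nn_integral_cong) (simp add: Fsq)
    finally show ?thesis .
  qed
  have Wvar4: "(\<integral>\<^sup>+x. ennreal ((W i x - a i)^2) \<partial>M) \<le> 4 * (\<integral>\<^sup>+z. ennreal ((h z)^2) \<partial>nu)" for i
  proof -
    have "(\<integral>\<^sup>+z. ennreal ((F i z)^2) \<partial>nu) \<le> (\<integral>\<^sup>+z. 4 * ennreal ((h z)^2) \<partial>nu)"
    proof (rule nn_integral_mono)
      fix z assume z: "z \<in> space nu"
      have "(F i z)^2 \<le> (2 * \<bar>h z\<bar>)^2"
        using Fb[OF z] by (metis abs_ge_zero power_mono power2_abs)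
      then have "(F i z)^2 \<le> 4 * (h z)^2" by (simp add: power_mult_distrib)
      then have "ennreal ((F i z)^2) \<le> ennreal (4 * (h z)^2)" by (rule ennreal_leI)
      also have "ennreal (4 * (h z)^2) = 4 * ennreal ((h z)^2)" by (simp add: ennreal_mult)
      finally show "ennreal ((F i z)^2) \<le> 4 * ennreal ((h z)^2)" .
    qed
    also have "\<dots> = 4 * (\<integral>\<^sup>+z. ennreal ((h z)^2) \<partial>nu)" by (rule nn_integral_cmult[OF hsq])
    finally show ?thesis unfolding Wvar .
  qed

  define U where "U i x = (\<Sum>j\<in>I i. ennreal \<bar>c i j\<bar> * emeasure (N x) (B i j))" for i x
  have Um: "U i \<in> borel_measurable M" for i unfolding U_def by (rule Umeas[OF I Bs])
  have UN: "(\<integral>\<^sup>+z. ennreal \<bar>F i z\<bar> \<partial>N x) = U i x" if x: "x \<in> space M" for i x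
  proof -
    have "(\<integral>\<^sup>+z. ennreal \<bar>F i z\<bar> \<partial>N x) = (\<integral>\<^sup>+z. ennreal (\<Sum>j\<in>I i. \<bar>c i j\<bar> * indicator (B i j) z) \<partial>N x)"
      by (rule nn_integral_cong) (simp add: Fabs space_N[OF x])
    also have "\<dots> = U i x" unfolding U_def
      by (rule ind_sum_nn) (use I Bs sets_N[OF x] in auto)
    finally show ?thesis .
  qed
  have Uint: "(\<integral>\<^sup>+x. U i x \<partial>M) = (\<integral>\<^sup>+z. ennreal \<bar>F i z\<bar> \<partial>nu)" for i
  proof -
    have "(\<integral>\<^sup>+x. U i x \<partial>M) = (\<Sum>j\<in>I i. \<integral>\<^sup>+x. ennreal \<bar>c i j\<bar> * emeasure (N x) (B i j) \<partial>M)"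
      unfolding U_def by (rule nn_integral_sum) (use N_meas Bs in measurable)
    also have "\<dots> = (\<Sum>j\<in>I i. ennreal \<bar>c i j\<bar> * emeasure nu (B i j))"
    proof (rule sum.cong[OF refl])
      fix j assume j: "j \<in> I i"
      have "(\<integral>\<^sup>+x. ennreal \<bar>c i j\<bar> * emeasure (N x) (B i j) \<partial>M) = ennreal \<bar>c i j\<bar> * (\<integral>\<^sup>+x. emeasure (N x) (B i j) \<partial>M)"
        by (rule nn_integral_cmult) (rule N_meas[OF Bs[OF j]])
      also have "\<dots> = ennreal \<bar>c i j\<bar> * emeasure nu (B i j)" by (simp only: N_mean[OF Bs[OF j]])
      finally show "(\<integral>\<^sup>+x. ennreal \<bar>c i j\<bar> * emeasure (N x) (B i j) \<partial>M) = ennreal \<bar>c i j\<bar> * emeasure nu (B i j)" .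
    qed
    also have "\<dots> = (\<integral>\<^sup>+z. ennreal (\<Sum>j\<in>I i. \<bar>c i j\<bar> * indicator (B i j) z) \<partial>nu)"
      by (rule ind_sum_nn[symmetric]) (use I Bs in auto)
    also have "\<dots> = (\<integral>\<^sup>+z. ennreal \<bar>F i z\<bar> \<partial>nu)"
      by (rule nn_integral_cong) (simp add: Fabs)
    finally show ?thesis .
  qed
  have LUm: "(\<lambda>x. liminf (\<lambda>i. U i x)) \<in> borel_measurable M"
    by (rule borel_measurable_liminf) (rule Um)
  have "(\<integral>\<^sup>+x. liminf (\<lambda>i. U i x) \<partial>M) \<le> liminf (\<lambda>i. \<integral>\<^sup>+x. U i x \<partial>M)"
    by (rule nn_integral_liminf) (rule Um)
  also have "\<dots> \<le> liminf (\<lambda>i. 2 * (\<integral>\<^sup>+z. ennreal \<bar>h z\<bar> \<partial>nu))"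
    by (rule Liminf_mono) (simp add: Uint F1)
  also have "\<dots> = 2 * (\<integral>\<^sup>+z. ennreal \<bar>h z\<bar> \<partial>nu)" by (rule Liminf_const) simp
  finally have "(\<integral>\<^sup>+x. liminf (\<lambda>i. U i x) \<partial>M) < \<infinity>" using two_fin by (rule le_less_trans)
  then have AEL: "AE x in M. liminf (\<lambda>i. U i x) \<noteq> \<infinity>"
    by (intro nn_integral_PInf_AE LUm) (simp only: infinity_ennreal_def less_top)
  have hN: "(\<integral>\<^sup>+z. ennreal \<bar>h z\<bar> \<partial>N x) \<le> liminf (\<lambda>i. U i x)" if x: "x \<in> space M" for x
  proof -
    have FmN: "(\<lambda>z. ennreal \<bar>F i z\<bar>) \<in> borel_measurable (N x)" for i
      unfolding measurable_cong_sets[OF sets_N[OF x] refl] using Fm[of i] by measurable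
    have "(\<integral>\<^sup>+z. ennreal \<bar>h z\<bar> \<partial>N x) = (\<integral>\<^sup>+z. liminf (\<lambda>i. ennreal \<bar>F i z\<bar>) \<partial>N x)"
    proof (rule nn_integral_cong)
      fix z assume "z \<in> space (N x)"
      then have z: "z \<in> space nu" using space_N[OF x] by simp
      have "(\<lambda>i. ennreal \<bar>F i z\<bar>) \<longlonglongrightarrow> ennreal \<bar>h z\<bar>"
        by (intro tendsto_ennrealI tendsto_rabs Flim[OF z])
      then show "ennreal \<bar>h z\<bar> = liminf (\<lambda>i. ennreal \<bar>F i z\<bar>)"
        by (intro lim_imp_Liminf[symmetric]) simp_all
    qed
    also have "\<dots> \<le> liminf (\<lambda>i. \<integral>\<^sup>+z. ennreal \<bar>F i z\<bar> \<partial>N x)"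
      by (rule nn_integral_liminf) (rule FmN)
    also have "\<dots> = liminf (\<lambda>i. U i x)" by (simp only: UN[OF x])
    finally show ?thesis .
  qed
  have AEint: "AE x in M. integrable (N x) h"
    using AEL AE_space
  proof eventually_elim
    case (elim x)
    have hmN: "h \<in> borel_measurable (N x)"
      unfolding measurable_cong_sets[OF sets_N[OF elim(2)] refl] by (rule hm)
    have "(\<integral>\<^sup>+z. ennreal \<bar>h z\<bar> \<partial>N x) < \<infinity>"
    proof -
      have "liminf (\<lambda>i. U i x) < \<infinity>" using elim(1) by (simp only: infinity_ennreal_def less_top)
      then show ?thesis by (rule le_less_trans[OF hN[OF elim(2)]])
    qed
    then show ?case by (intro integrableI_bounded hmN) simp
  qed
  then show "AE x in M. integrable (N x) h" .

  have hint: "integrable nu h" by (intro integrableI_bounded hm) (use h1 in simp)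
  have wint: "integrable nu (\<lambda>z. 2 * \<bar>h z\<bar>)" using hint by (intro integrable_mult_right integrable_abs)
  have a_eq: "a i = (\<integral>z. F i z \<partial>nu)" for i
  proof -
    have "(\<integral>z. F i z \<partial>nu) = (\<integral>z. (\<Sum>j\<in>I i. c i j * indicator (B i j) z) \<partial>nu)"
      by (rule Bochner_Integration.integral_cong[OF refl]) (simp add: rep)
    also have "\<dots> = (\<Sum>j\<in>I i. c i j * measure nu (B i j))"
      by (rule ind_sum_int(2)) (use I Bs Bf in auto)
    finally show ?thesis unfolding a_def by (simp add: measure_def)
  qed
  have alim: "a \<longlonglongrightarrow> (\<integral>z. h z \<partial>nu)"
    unfolding a_eq
    by (rule integral_dominated_convergence[OF hm Fm wint]) (use Flim Fb in \<open>auto intro!: AE_I2\<close>)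
  have AEW: "AE x in M. (\<lambda>i. W i x) \<longlonglongrightarrow> (\<integral>z. h z \<partial>N x)"
    using AEint AEfin AE_space
  proof eventually_elim
    case (elim x)
    have x: "x \<in> space M" by (rule elim(3))
    have sp: "space (N x) = space nu" by (rule space_N[OF x])
    have W_eq: "W i x = (\<integral>z. F i z \<partial>N x)" for i
      unfolding W_def
      by (rule simple_N(2)[symmetric, OF I]) (use Bs x elim(2) rep in auto)
    have FmN: "F i \<in> borel_measurable (N x)" for i
      unfolding measurable_cong_sets[OF sets_N[OF x] refl] by (rule Fm)
    have hmN: "h \<in> borel_measurable (N x)"
      unfolding measurable_cong_sets[OF sets_N[OF x] refl] by (rule hm)
    have wintN: "integrable (N x) (\<lambda>z. 2 * \<bar>h z\<bar>)" using elim(1) by (intro integrable_mult_right integrable_abs)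
    have "(\<lambda>i. \<integral>z. F i z \<partial>N x) \<longlonglongrightarrow> (\<integral>z. h z \<partial>N x)"
      by (rule integral_dominated_convergence[OF hmN FmN wintN]) (use Flim Fb sp in \<open>auto intro!: AE_I2\<close>)
    then show ?case unfolding W_eq .
  qed
  define G where "G x = lim (\<lambda>i. W i x)" for x
  have Gm: "G \<in> borel_measurable M" unfolding G_def by (rule borel_measurable_lim_metric) (rule Wm)
  have AEG: "AE x in M. G x = (\<integral>z. h z \<partial>N x)"
    using AEW by eventually_elim (simp add: G_def limI)
  have "(\<integral>\<^sup>+x. ennreal ((G x - (\<integral>z. h z \<partial>nu))^2) \<partial>M) = (\<integral>\<^sup>+x. liminf (\<lambda>i. ennreal ((W i x - a i)^2)) \<partial>M)"
  proof (rule nn_integral_cong_AE)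
    show "AE x in M. ennreal ((G x - (\<integral>z. h z \<partial>nu))^2) = liminf (\<lambda>i. ennreal ((W i x - a i)^2))"
      using AEW AEG
    proof eventually_elim
      case (elim x)
      have "(\<lambda>i. ennreal ((W i x - a i)^2)) \<longlonglongrightarrow> ennreal ((G x - (\<integral>z. h z \<partial>nu))^2)"
        unfolding elim(2) by (intro tendsto_ennrealI tendsto_power tendsto_diff elim(1) alim)
      then show ?case by (intro lim_imp_Liminf[symmetric]) simp_all
    qed
  qed
  also have "\<dots> \<le> liminf (\<lambda>i. \<integral>\<^sup>+x. ennreal ((W i x - a i)^2) \<partial>M)"
    by (rule nn_integral_liminf) (use Wm in measurable)
  also have "\<dots> \<le> liminf (\<lambda>i. 4 * (\<integral>\<^sup>+z. ennreal ((h z)^2) \<partial>nu))"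
    by (rule Liminf_mono) (simp add: Wvar4)
  also have "\<dots> = 4 * (\<integral>\<^sup>+z. ennreal ((h z)^2) \<partial>nu)" by (rule Liminf_const) simp
  finally show "\<exists>G\<in>borel_measurable M. (AE x in M. G x = (\<integral>z. h z \<partial>N x)) \<and>
          (\<integral>\<^sup>+x. ennreal ((G x - (\<integral>z. h z \<partial>nu))^2) \<partial>M) \<le> 4 * (\<integral>\<^sup>+z. ennreal ((h z)^2) \<partial>nu)"
    using Gm AEG by blast
qed

end

lemma sq3: "(a - b + c)^2 \<le> 3 * a^2 + 3 * b^2 + 3 * (c::real)^2"
proof -
  have "(a - b + c)^2 + ((a + b)^2 + (a - c)^2 + (b + c)^2) = 3 * a^2 + 3 * b^2 + 3 * c^2"
    by (simp add: power2_eq_square algebra_simps)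
  moreover have "0 \<le> (a + b)^2 + (a - c)^2 + (b + c)^2" by simp
  ultimately show ?thesis by linarith
qed

lemma L1_ind:
  fixes u :: "'b \<Rightarrow> real"
  assumes um: "u \<in> borel_measurable Q" and u2: "(\<integral>\<^sup>+z. ennreal ((u z)^2) \<partial>Q) < \<infinity>"
    and B: "B \<in> sets Q" "emeasure Q B < \<infinity>"
  shows "(\<lambda>z. u z * indicator B z) \<in> borel_measurable Q"
    and "(\<integral>\<^sup>+z. ennreal \<bar>u z * indicator B z\<bar> \<partial>Q) < \<infinity>"
    and "(\<integral>\<^sup>+z. ennreal ((u z * indicator B z)^2) \<partial>Q) < \<infinity>"
    and "integrable Q (\<lambda>z. u z * indicator B z)"
proof -
  show m: "(\<lambda>z. u z * indicator B z) \<in> borel_measurable Q" using um B(1) by measurable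
  have "(\<integral>\<^sup>+z. ennreal \<bar>u z * indicator B z\<bar> \<partial>Q) \<le> (\<integral>\<^sup>+z. indicator B z + ennreal ((u z)^2) \<partial>Q)"
  proof (rule nn_integral_mono)
    fix z
    have "\<bar>u z\<bar> \<le> 1 + (u z)^2"
    proof (cases "\<bar>u z\<bar> \<le> 1")
      case True
      have "0 \<le> (u z)^2" by simp
      then show ?thesis using True by linarith
    next
      case False
      have "\<bar>u z\<bar> * 1 \<le> \<bar>u z\<bar> * \<bar>u z\<bar>" by (rule mult_left_mono) (use False in auto)
      moreover have "\<bar>u z\<bar> * \<bar>u z\<bar> = (u z)^2" by (simp add: power2_eq_square abs_mult_self_eq)
      ultimately show ?thesis by linarith
    qed
    then have "\<bar>u z * indicator B z\<bar> \<le> indicator B z + (u z)^2"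
      by (cases "z \<in> B") (auto simp: indicator_def)
    then have "ennreal \<bar>u z * indicator B z\<bar> \<le> ennreal (indicator B z + (u z)^2)" by (rule ennreal_leI)
    also have "\<dots> = indicator B z + ennreal ((u z)^2)"
      by (subst ennreal_plus) (auto simp: indicator_def)
    finally show "ennreal \<bar>u z * indicator B z\<bar> \<le> indicator B z + ennreal ((u z)^2)" .
  qed
  also have "\<dots> = emeasure Q B + (\<integral>\<^sup>+z. ennreal ((u z)^2) \<partial>Q)"
    by (subst nn_integral_add) (use um B(1) in auto)
  also have "\<dots> < \<infinity>" using B(2) u2 by (simp add: infinity_ennreal_def)
  finally show fin1: "(\<integral>\<^sup>+z. ennreal \<bar>u z * indicator B z\<bar> \<partial>Q) < \<infinity>" .
  have "(\<integral>\<^sup>+z. ennreal ((u z * indicator B z)^2) \<partial>Q) \<le> (\<integral>\<^sup>+z. ennreal ((u z)^2) \<partial>Q)"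
    by (rule nn_integral_mono) (auto simp: indicator_def)
  then show "(\<integral>\<^sup>+z. ennreal ((u z * indicator B z)^2) \<partial>Q) < \<infinity>" using u2 by (rule le_less_trans)
  show "integrable Q (\<lambda>z. u z * indicator B z)"
    by (rule integrableI_bounded[OF m]) (use fin1 in simp)
qed

lemma tail_L2:
  fixes u :: "'b \<Rightarrow> real"
  assumes um: "u \<in> borel_measurable Q" and u2: "(\<integral>\<^sup>+z. ennreal ((u z)^2) \<partial>Q) < \<infinity>"
    and A: "range A \<subseteq> sets Q" "(\<Union>i. A i) = space Q" "incseq A"
  shows "(\<lambda>n. \<integral>\<^sup>+z. ennreal ((u z - u z * indicator (A n) z)^2) \<partial>Q) \<longlonglongrightarrow> 0"
proof -
  define T where "T n z = ennreal ((u z - u z * indicator (A n) z)^2)" for n z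
  have Tm: "T n \<in> borel_measurable Q" for n unfolding T_def using um A(1) by measurable
  have dec: "decseq T"
  proof (rule decseq_SucI, rule le_funI)
    fix n z
    show "T (Suc n) z \<le> T n z"
      using A(3) by (cases "z \<in> A (Suc n)"; cases "z \<in> A n") (auto simp: T_def indicator_def incseq_Suc_iff)
  qed
  have fin: "(\<integral>\<^sup>+z. T n z \<partial>Q) < \<infinity>" for n
  proof -
    have "(\<integral>\<^sup>+z. T n z \<partial>Q) \<le> (\<integral>\<^sup>+z. ennreal ((u z)^2) \<partial>Q)"
      by (rule nn_integral_mono) (auto simp: T_def indicator_def)
    then show ?thesis using u2 by (rule le_less_trans)
  qed
  have "(\<integral>\<^sup>+z. (INF n. T n z) \<partial>Q) = (INF n. \<integral>\<^sup>+z. T n z \<partial>Q)"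
    by (rule nn_integral_monotone_convergence_INF_decseq[OF dec Tm fin])
  moreover have "(\<integral>\<^sup>+z. (INF n. T n z) \<partial>Q) = 0"
  proof -
    have "(INF n. T n z) = 0" if z: "z \<in> space Q" for z
    proof -
      from z A(2) obtain m where "z \<in> A m" by blast
      then have "T m z = 0" by (simp add: T_def)
      then show ?thesis by (metis INF_lower2 UNIV_I le_zero_eq)
    qed
    then have "(\<integral>\<^sup>+z. (INF n. T n z) \<partial>Q) = (\<integral>\<^sup>+z. 0 \<partial>Q)" by (intro nn_integral_cong) simp
    then show ?thesis by simp
  qed
  moreover have "decseq (\<lambda>n. \<integral>\<^sup>+z. T n z \<partial>Q)"
  proof (rule decseq_SucI, rule nn_integral_mono)
    fix n z
    from dec have "T (Suc n) \<le> T n" by (simp add: decseq_Suc_iff)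
    then show "T (Suc n) z \<le> T n z" by (simp add: le_fun_def)
  qed
  ultimately show ?thesis unfolding T_def[symmetric] using LIMSEQ_INF by metis
qed

context prm
begin

lemma CPI_parts:
  assumes "compensated_poisson_integral M nu N f Y"
  shows "f \<in> borel_measurable nu" "(\<integral>\<^sup>+ z. ennreal ((f z)\<^sup>2) \<partial>nu) < \<infinity>" "Y \<in> borel_measurable M"
    "\<And>A :: nat \<Rightarrow> 'b set. (\<forall>n. A n \<in> sets nu \<and> emeasure nu (A n) < \<infinity>) \<Longrightarrow>
        ((\<lambda>n. \<integral>\<^sup>+ z. ennreal ((f z - f z * indicator (A n) z)\<^sup>2) \<partial>nu) \<longlonglongrightarrow> 0) \<Longrightarrow>
        ((\<lambda>n. \<integral>\<^sup>+ x. ennreal ((Y x - ((\<integral> z. f z * indicator (A n) z \<partial>(N x))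
                                     - (\<integral> z. f z * indicator (A n) z \<partial>nu)))\<^sup>2) \<partial>M) \<longlonglongrightarrow> 0)"
  using assms unfolding compensated_poisson_integral_def by blast+

lemma CPI_diff:
  fixes f g :: "'b \<Rightarrow> real" and Y Z :: "'a \<Rightarrow> real"
  assumes sf: "sigma_finite_measure nu"
    and Yf: "compensated_poisson_integral M nu N f Y"
    and Zg: "compensated_poisson_integral M nu N g Z"
  shows "(\<integral>\<^sup>+x. ennreal ((Y x - Z x)^2) \<partial>M) \<le> 12 * (\<integral>\<^sup>+z. ennreal ((f z - g z)^2) \<partial>nu)"
proof (cases "(\<integral>\<^sup>+z. ennreal ((f z - g z)^2) \<partial>nu) = \<infinity>")
  case True
  have "12 * (\<integral>\<^sup>+z. ennreal ((f z - g z)^2) \<partial>nu) = top"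
    by (simp only: True infinity_ennreal_def ennreal_mult_top) simp
  then show ?thesis by simp
next
  case False
  then have fg2: "(\<integral>\<^sup>+z. ennreal ((f z - g z)^2) \<partial>nu) < \<infinity>"
    by (simp only: infinity_ennreal_def less_top)
  note fm = CPI_parts(1)[OF Yf] and f2 = CPI_parts(2)[OF Yf] and Ym = CPI_parts(3)[OF Yf]
  note gm = CPI_parts(1)[OF Zg] and g2 = CPI_parts(2)[OF Zg] and Zm = CPI_parts(3)[OF Zg]
  have fgm: "(\<lambda>z. f z - g z) \<in> borel_measurable nu" using fm gm by measurable
  obtain A where A: "range A \<subseteq> sets nu" "(\<Union>i. A i) = space nu" "\<And>i. emeasure nu (A i) \<noteq> \<infinity>" "incseq A"
    using sigma_finite_measure.sigma_finite_incseq[OF sf] by blast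
  have As: "A n \<in> sets nu" for n using A(1) by auto
  have Af: "emeasure nu (A n) < \<infinity>" for n using A(3)[of n] by (simp only: infinity_ennreal_def less_top)
  have AA: "\<forall>n. A n \<in> sets nu \<and> emeasure nu (A n) < \<infinity>" using As Af by blast
  define hf where "hf n z = f z * indicator (A n) z" for n z
  define hg where "hg n z = g z * indicator (A n) z" for n z
  define hh where "hh n z = (f z - g z) * indicator (A n) z" for n z
  define cf where "cf n = (\<integral>z. hf n z \<partial>nu)" for n
  define cg where "cg n = (\<integral>z. hg n z \<partial>nu)" for n
  define ch where "ch n = (\<integral>z. hh n z \<partial>nu)" for n
  define \<alpha> where "\<alpha> n = (\<integral>\<^sup>+ x. ennreal ((Y x - ((\<integral> z. hf n z \<partial>(N x)) - cf n))\<^sup>2) \<partial>M)" for n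
  define \<beta> where "\<beta> n = (\<integral>\<^sup>+ x. ennreal ((Z x - ((\<integral> z. hg n z \<partial>(N x)) - cg n))\<^sup>2) \<partial>M)" for n
  have alim: "\<alpha> \<longlonglongrightarrow> 0"
    unfolding \<alpha>_def hf_def cf_def by (rule CPI_parts(4)[OF Yf AA tail_L2[OF fm f2 A(1) A(2) A(4)]])
  have blim: "\<beta> \<longlonglongrightarrow> 0"
    unfolding \<beta>_def hg_def cg_def by (rule CPI_parts(4)[OF Zg AA tail_L2[OF gm g2 A(1) A(2) A(4)]])
  note Lf = L1_ind[OF fm f2 As Af, folded hf_def]
  note Lg = L1_ind[OF gm g2 As Af, folded hg_def]
  note Lh = L1_ind[OF fgm fg2 As Af, folded hh_def]
  have "\<forall>n. \<exists>G. G \<in> borel_measurable M \<and> (AE x in M. G x = (\<integral>z. hf n z \<partial>N x))"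
  proof
    fix n
    from KL(2)[OF Lf(1,2,3)] show "\<exists>G. G \<in> borel_measurable M \<and> (AE x in M. G x = (\<integral>z. hf n z \<partial>N x))" by blast
  qed
  from choice[OF this] obtain Gf :: "nat \<Rightarrow> 'a \<Rightarrow> real" where
    Gf: "\<forall>n. Gf n \<in> borel_measurable M \<and> (AE x in M. Gf n x = (\<integral>z. hf n z \<partial>N x))" by blast
  have "\<forall>n. \<exists>G. G \<in> borel_measurable M \<and> (AE x in M. G x = (\<integral>z. hg n z \<partial>N x))"
  proof
    fix n
    from KL(2)[OF Lg(1,2,3)] show "\<exists>G. G \<in> borel_measurable M \<and> (AE x in M. G x = (\<integral>z. hg n z \<partial>N x))" by blast
  qed
  from choice[OF this] obtain Gg :: "nat \<Rightarrow> 'a \<Rightarrow> real" where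
    Gg: "\<forall>n. Gg n \<in> borel_measurable M \<and> (AE x in M. Gg n x = (\<integral>z. hg n z \<partial>N x))" by blast
  have "\<forall>n. \<exists>G. G \<in> borel_measurable M \<and> (AE x in M. G x = (\<integral>z. hh n z \<partial>N x)) \<and>
          (\<integral>\<^sup>+x. ennreal ((G x - (\<integral>z. hh n z \<partial>nu))^2) \<partial>M) \<le> 4 * (\<integral>\<^sup>+z. ennreal ((hh n z)^2) \<partial>nu)"
  proof
    fix n
    from KL(2)[OF Lh(1,2,3)] show "\<exists>G. G \<in> borel_measurable M \<and> (AE x in M. G x = (\<integral>z. hh n z \<partial>N x)) \<and>
          (\<integral>\<^sup>+x. ennreal ((G x - (\<integral>z. hh n z \<partial>nu))^2) \<partial>M) \<le> 4 * (\<integral>\<^sup>+z. ennreal ((hh n z)^2) \<partial>nu)" by blast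
  qed
  from choice[OF this] obtain Gh :: "nat \<Rightarrow> 'a \<Rightarrow> real" where
    Gh: "\<forall>n. Gh n \<in> borel_measurable M \<and> (AE x in M. Gh n x = (\<integral>z. hh n z \<partial>N x)) \<and>
          (\<integral>\<^sup>+x. ennreal ((Gh n x - (\<integral>z. hh n z \<partial>nu))^2) \<partial>M) \<le> 4 * (\<integral>\<^sup>+z. ennreal ((hh n z)^2) \<partial>nu)" by blast
  have Gfm: "Gf n \<in> borel_measurable M" for n using Gf by blast
  have Ggm: "Gg n \<in> borel_measurable M" for n using Gg by blast
  have Ghm: "Gh n \<in> borel_measurable M" for n using Gh by blast
  have ch_eq: "ch n = cf n - cg n" for n
  proof -
    have "(\<lambda>z. hh n z) = (\<lambda>z. hf n z - hg n z)" by (auto simp: hh_def hf_def hg_def algebra_simps)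
    then show ?thesis unfolding ch_def cf_def cg_def using Lf(4) Lg(4) by simp
  qed
  have AEall: "AE x in M. \<forall>n. Gf n x = (\<integral>z. hf n z \<partial>N x) \<and> Gg n x = (\<integral>z. hg n z \<partial>N x) \<and>
       Gh n x = (\<integral>z. hh n z \<partial>N x) \<and> integrable (N x) (hf n) \<and> integrable (N x) (hg n)"
  proof (subst AE_all_countable, rule allI)
    fix n
    have "AE x in M. Gf n x = (\<integral>z. hf n z \<partial>N x)" using Gf by blast
    moreover have "AE x in M. Gg n x = (\<integral>z. hg n z \<partial>N x)" using Gg by blast
    moreover have "AE x in M. Gh n x = (\<integral>z. hh n z \<partial>N x)" using Gh by blast
    moreover have "AE x in M. integrable (N x) (hf n)" using KL(1)[OF Lf(1,2,3)] by (simp add: hf_def[abs_def])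
    moreover have "AE x in M. integrable (N x) (hg n)" using KL(1)[OF Lg(1,2,3)] by (simp add: hg_def[abs_def])
    ultimately show "AE x in M. Gf n x = (\<integral>z. hf n z \<partial>N x) \<and> Gg n x = (\<integral>z. hg n z \<partial>N x) \<and>
       Gh n x = (\<integral>z. hh n z \<partial>N x) \<and> integrable (N x) (hf n) \<and> integrable (N x) (hg n)"
      by eventually_elim blast
  qed
  define K where "K = (\<integral>\<^sup>+z. ennreal ((f z - g z)^2) \<partial>nu)"
  have bound: "(\<integral>\<^sup>+x. ennreal ((Y x - Z x)^2) \<partial>M) \<le> 3 * \<alpha> n + 3 * \<beta> n + 12 * K" for n
  proof -
    define P where "P x = ennreal ((Y x - (Gf n x - cf n))^2)" for x
    define Q where "Q x = ennreal ((Z x - (Gg n x - cg n))^2)" for x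
    define R where "R x = ennreal ((Gh n x - ch n)^2)" for x
    have Pm: "P \<in> borel_measurable M" unfolding P_def using Ym Gfm[of n] by measurable
    have Qm: "Q \<in> borel_measurable M" unfolding Q_def using Zm Ggm[of n] by measurable
    have Rm: "R \<in> borel_measurable M" unfolding R_def using Ghm[of n] by measurable
    have pw: "AE x in M. ennreal ((Y x - Z x)^2) \<le> 3 * P x + 3 * Q x + 3 * R x"
      using AEall
    proof eventually_elim
      case (elim x)
      have Ghx: "Gh n x = Gf n x - Gg n x"
      proof -
        have "(\<lambda>z. hh n z) = (\<lambda>z. hf n z - hg n z)" by (auto simp: hh_def hf_def hg_def algebra_simps)
        then have "(\<integral>z. hh n z \<partial>N x) = (\<integral>z. hf n z \<partial>N x) - (\<integral>z. hg n z \<partial>N x)"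
          using elim by simp
        then show ?thesis using elim by simp
      qed
      have "Y x - Z x = (Y x - (Gf n x - cf n)) - (Z x - (Gg n x - cg n)) + (Gh n x - ch n)"
        unfolding Ghx ch_eq by simp
      then have "(Y x - Z x)^2 \<le> 3 * (Y x - (Gf n x - cf n))^2 + 3 * (Z x - (Gg n x - cg n))^2 + 3 * (Gh n x - ch n)^2"
        using sq3 by metis
      then have "ennreal ((Y x - Z x)^2) \<le> ennreal (3 * (Y x - (Gf n x - cf n))^2 + 3 * (Z x - (Gg n x - cg n))^2 + 3 * (Gh n x - ch n)^2)"
        by (rule ennreal_leI)
      also have "\<dots> = 3 * P x + 3 * Q x + 3 * R x"
        unfolding P_def Q_def R_def by (simp add: ennreal_plus ennreal_mult)
      finally show ?case .
    qed
    have "(\<integral>\<^sup>+x. ennreal ((Y x - Z x)^2) \<partial>M) \<le> (\<integral>\<^sup>+x. 3 * P x + 3 * Q x + 3 * R x \<partial>M)"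
      by (rule nn_integral_mono_AE[OF pw])
    also have "\<dots> = 3 * (\<integral>\<^sup>+x. P x \<partial>M) + 3 * (\<integral>\<^sup>+x. Q x \<partial>M) + 3 * (\<integral>\<^sup>+x. R x \<partial>M)"
      using Pm Qm Rm by (simp add: nn_integral_add nn_integral_cmult)
    also have "(\<integral>\<^sup>+x. P x \<partial>M) = \<alpha> n"
      unfolding \<alpha>_def P_def by (rule nn_integral_cong_AE) (use AEall in \<open>eventually_elim, simp\<close>)
    also have "(\<integral>\<^sup>+x. Q x \<partial>M) = \<beta> n"
      unfolding \<beta>_def Q_def by (rule nn_integral_cong_AE) (use AEall in \<open>eventually_elim, simp\<close>)
    also have "(\<integral>\<^sup>+x. R x \<partial>M) \<le> 4 * K"
    proof -
      have "(\<integral>\<^sup>+x. R x \<partial>M) \<le> 4 * (\<integral>\<^sup>+z. ennreal ((hh n z)^2) \<partial>nu)"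
        unfolding R_def ch_def using Gh by blast
      also have "(\<integral>\<^sup>+z. ennreal ((hh n z)^2) \<partial>nu) \<le> K"
        unfolding K_def by (rule nn_integral_mono) (auto simp: hh_def indicator_def)
      finally show ?thesis by (simp add: mult_left_mono)
    qed
    finally show ?thesis by (simp add: mult_left_mono add_left_mono mult.assoc[symmetric])
  qed
  have lim: "(\<lambda>n. 3 * \<alpha> n + 3 * \<beta> n + 12 * K) \<longlonglongrightarrow> 3 * 0 + 3 * 0 + 12 * K"
    by (intro tendsto_add tendsto_const ennreal_tendsto_cmult alim blim) simp_all
  have "(\<integral>\<^sup>+x. ennreal ((Y x - Z x)^2) \<partial>M) \<le> 3 * 0 + 3 * 0 + 12 * K"
    by (rule LIMSEQ_le_const[OF lim]) (use bound in blast)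
  then show ?thesis by (simp add: K_def)
qed

end

lemma chain_dyadic:
  fixes Y :: "real \<Rightarrow> real" and b :: "nat \<Rightarrow> real"
  assumes Y0: "\<bar>Y 0\<bar> \<le> a"
    and D: "\<And>n k. k < 2^n \<Longrightarrow> \<bar>Y ((real k + 1) / 2^n) - Y (real k / 2^n)\<bar> \<le> b n"
  shows "k \<le> 2^n \<Longrightarrow> \<bar>Y (real k / 2^n)\<bar> \<le> a + (\<Sum>i\<le>n. b i)"
proof (induction n arbitrary: k)
  case 0
  have b0: "\<bar>Y 1 - Y 0\<bar> \<le> b 0" using D[of 0 0] by simp
  from 0 have "k = 0 \<or> k = 1" by auto
  then show ?case
  proof
    assume "k = 0" then show ?thesis using Y0 b0 by simp
  next
    assume "k = 1" then show ?thesis using Y0 b0 by simp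
  qed
next
  case (Suc n)
  have bnn: "0 \<le> b (Suc n)" using D[of 0 "Suc n"] by (smt (verit) abs_ge_zero zero_less_power zero_less_numeral)
  obtain m where m: "k = 2 * m \<or> k = 2 * m + 1" by (metis oddE evenE)
  then show ?case
  proof
    assume k: "k = 2 * m"
    then have "m \<le> 2^n" using Suc.prems by simp
    from Suc.IH[OF this] have "\<bar>Y (real m / 2^n)\<bar> \<le> a + (\<Sum>i\<le>n. b i)" .
    moreover have "real k / 2^Suc n = real m / 2^n" using k by simp
    ultimately show ?thesis using bnn by simp
  next
    assume k: "k = 2 * m + 1"
    then have mlt: "2 * m < 2^Suc n" using Suc.prems by simp
    then have "m \<le> 2^n" by simp
    from Suc.IH[OF this] have IH: "\<bar>Y (real m / 2^n)\<bar> \<le> a + (\<Sum>i\<le>n. b i)" .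
    have e1: "real (2 * m) / 2^Suc n = real m / 2^n" by simp
    have e2: "(real (2 * m) + 1) / 2^Suc n = real k / 2^Suc n" using k by simp
    have "\<bar>Y (real k / 2^Suc n) - Y (real m / 2^n)\<bar> \<le> b (Suc n)"
      using D[OF mlt] unfolding e1 e2 .
    then show ?thesis using IH by simp
  qed
qed

lemma chain_bound:
  fixes Y :: "real \<Rightarrow> real" and b :: "nat \<Rightarrow> real"
  assumes cont: "continuous_on {0..1} Y" and Y0: "\<bar>Y 0\<bar> \<le> a"
    and D: "\<And>n k. k < 2^n \<Longrightarrow> \<bar>Y ((real k + 1) / 2^n) - Y (real k / 2^n)\<bar> \<le> b n"
    and bS: "\<And>n. (\<Sum>i\<le>n. b i) \<le> S"
    and t: "t \<in> {0..1}"
  shows "\<bar>Y t\<bar> \<le> a + S"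
proof -
  define tn where "tn n = real (nat \<lfloor>t * 2^n\<rfloor>) / 2^n" for n :: nat
  have fl0: "0 \<le> \<lfloor>t * 2^n\<rfloor>" for n :: nat using t by simp
  have tn_eq: "tn n = \<lfloor>t * 2^n\<rfloor> / 2^n" for n using fl0[of n] by (simp add: tn_def)
  have tn_le: "tn n \<le> t" for n
    unfolding tn_eq by (simp add: divide_le_eq)
  have tn_ge: "t - 1 / 2^n \<le> tn n" for n :: nat
  proof -
    have "t * 2^n - 1 \<le> \<lfloor>t * 2^n\<rfloor>" by linarith
    then have "(t * 2^n - 1) / 2^n \<le> \<lfloor>t * 2^n\<rfloor> / 2^n" by (simp add: divide_right_mono)
    then show ?thesis unfolding tn_eq by (simp add: diff_divide_distrib)
  qed
  have tn0: "0 \<le> tn n" for n unfolding tn_def by simp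
  have tn_in: "tn n \<in> {0..1}" for n using tn_le[of n] tn0[of n] t by auto
  have kle: "nat \<lfloor>t * 2^n\<rfloor> \<le> 2^n" for n :: nat
  proof -
    have "t * 2^n \<le> 2^n" using t by simp
    then have "\<lfloor>t * 2^n\<rfloor> \<le> 2^n" by (metis floor_le_numeral floor_mono floor_of_nat of_nat_numeral of_nat_power floor_of_int of_int_of_nat_eq)
    then show ?thesis by (simp add: nat_le_iff)
  qed
  have bd: "\<bar>Y (tn n)\<bar> \<le> a + S" for n
    using chain_dyadic[OF Y0 D kle[of n]] bS[of n] unfolding tn_def by linarith
  have lim0: "(\<lambda>n::nat. t - 1 / 2^n) \<longlonglongrightarrow> t - 0"
    by (intro tendsto_diff tendsto_const) (simp add: LIMSEQ_divide_realpow_zero)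
  have "tn \<longlonglongrightarrow> t"
    by (rule tendsto_sandwich[OF _ _ lim0[simplified] tendsto_const]) (use tn_ge tn_le in auto)
  then have "(\<lambda>n. Y (tn n)) \<longlonglongrightarrow> Y t"
    by (rule continuous_on_tendsto_compose[OF cont _ t]) (use tn_in in auto)
  then have "(\<lambda>n. \<bar>Y (tn n)\<bar>) \<longlonglongrightarrow> \<bar>Y t\<bar>" by (rule tendsto_rabs)
  then show ?thesis by (rule LIMSEQ_le_const2) (use bd in blast)
qed

lemma vanish:
  fixes g :: "'z \<Rightarrow> ennreal" and p :: "'z \<Rightarrow> real"
  assumes gm: "g \<in> borel_measurable Q" and pm: "p \<in> borel_measurable Q" and gfin: "(\<integral>\<^sup>+z. g z \<partial>Q) < \<infinity>"
  shows "((\<lambda>\<epsilon>. \<integral>\<^sup>+z. g z * indicator {u. 0 < \<bar>u\<bar> \<and> \<bar>u\<bar> < \<epsilon>} (p z) \<partial>Q) \<longlongrightarrow> 0) (at_right 0)"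
proof -
  define T where "T n z = g z * indicator {u. 0 < \<bar>u\<bar> \<and> \<bar>u\<bar> < 1 / real (Suc n)} (p z)" for n z
  have Tm: "T n \<in> borel_measurable Q" for n unfolding T_def using gm pm by measurable
  have dec: "decseq T"
  proof (rule decseq_SucI, rule le_funI)
    fix n z
    have "1 / real (Suc (Suc n)) \<le> 1 / real (Suc n)" by (simp add: frac_le)
    then have "indicator {u. 0 < \<bar>u\<bar> \<and> \<bar>u\<bar> < 1 / real (Suc (Suc n))} (p z) \<le> (indicator {u. 0 < \<bar>u\<bar> \<and> \<bar>u\<bar> < 1 / real (Suc n)} (p z) :: ennreal)"
      by (auto simp: indicator_def)
    then show "T (Suc n) z \<le> T n z" unfolding T_def by (rule mult_left_mono) simp
  qed
  have Tle: "T n z \<le> g z" for n z unfolding T_def by (simp add: indicator_def)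
  have fin: "(\<integral>\<^sup>+z. T n z \<partial>Q) < \<infinity>" for n
    using nn_integral_mono[of Q "T n" g, OF Tle] gfin by (rule le_less_trans)
  have INF0: "(INF n. T n z) = 0" for z
  proof (cases "p z = 0")
    case True
    then have "T 0 z = 0" by (simp add: T_def)
    then show ?thesis by (metis INF_lower2 UNIV_I le_zero_eq)
  next
    case False
    then have "0 < \<bar>p z\<bar>" by simp
    then obtain m where m: "m > 0" "inverse (real m) < \<bar>p z\<bar>" using ex_inverse_of_nat_less by blast
    then obtain n where "m = Suc n" using gr0_implies_Suc by blast
    then have n: "inverse (real (Suc n)) < \<bar>p z\<bar>" using m by simp
    then have "T n z = 0" by (simp add: T_def indicator_def divide_inverse)
    then show ?thesis by (metis INF_lower2 UNIV_I le_zero_eq)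
  qed
  have "(INF n. \<integral>\<^sup>+z. T n z \<partial>Q) = (\<integral>\<^sup>+z. (INF n. T n z) \<partial>Q)"
    by (rule nn_integral_monotone_convergence_INF_decseq[OF dec Tm fin, symmetric])
  also have "\<dots> = 0" by (simp add: INF0)
  finally have INFI: "(INF n. \<integral>\<^sup>+z. T n z \<partial>Q) = 0" .
  show ?thesis
  proof (rule order_tendstoI)
    fix a :: ennreal assume "a < 0" then show "eventually (\<lambda>\<epsilon>. a < (\<integral>\<^sup>+z. g z * indicator {u. 0 < \<bar>u\<bar> \<and> \<bar>u\<bar> < \<epsilon>} (p z) \<partial>Q)) (at_right 0)"
      by simp
  next
    fix a :: ennreal assume a: "0 < a"
    then have "(INF n. \<integral>\<^sup>+z. T n z \<partial>Q) < a" unfolding INFI .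
    then obtain n where n: "(\<integral>\<^sup>+z. T n z \<partial>Q) < a" by (auto simp: INF_less_iff)
    show "eventually (\<lambda>\<epsilon>. (\<integral>\<^sup>+z. g z * indicator {u. 0 < \<bar>u\<bar> \<and> \<bar>u\<bar> < \<epsilon>} (p z) \<partial>Q) < a) (at_right 0)"
      unfolding eventually_at_right_field
    proof (intro exI[of _ "1 / real (Suc n)"] conjI allI impI)
      show "(0::real) < 1 / real (Suc n)" by simp
      fix \<epsilon> :: real assume "0 < \<epsilon>" "\<epsilon> < 1 / real (Suc n)"
      then have "(\<integral>\<^sup>+z. g z * indicator {u. 0 < \<bar>u\<bar> \<and> \<bar>u\<bar> < \<epsilon>} (p z) \<partial>Q) \<le> (\<integral>\<^sup>+z. T n z \<partial>Q)"
        unfolding T_def by (intro nn_integral_mono mult_left_mono) (auto simp: indicator_def)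
      then show "(\<integral>\<^sup>+z. g z * indicator {u. 0 < \<bar>u\<bar> \<and> \<bar>u\<bar> < \<epsilon>} (p z) \<partial>Q) < a" using n by (rule le_less_trans)
    qed
  qed
qed

lemma cheb:
  fixes V :: "'a \<Rightarrow> real"
  assumes Vm: "V \<in> borel_measurable M" and c: "0 < c"
  shows "emeasure M {x\<in>space M. c < \<bar>V x\<bar>} \<le> ennreal (1 / c^2) * (\<integral>\<^sup>+x. ennreal ((V x)^2) \<partial>M)"
proof -
  have S: "{x\<in>space M. c < \<bar>V x\<bar>} \<in> sets M" using Vm by measurable
  have "emeasure M {x\<in>space M. c < \<bar>V x\<bar>} = (\<integral>\<^sup>+x. indicator {x\<in>space M. c < \<bar>V x\<bar>} x \<partial>M)"
    using S by simp
  also have "\<dots> \<le> (\<integral>\<^sup>+x. ennreal (1 / c^2) * ennreal ((V x)^2) \<partial>M)"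
  proof (rule nn_integral_mono)
    fix x assume x: "x \<in> space M"
    show "indicator {x\<in>space M. c < \<bar>V x\<bar>} x \<le> ennreal (1 / c^2) * ennreal ((V x)^2)"
    proof (cases "c < \<bar>V x\<bar>")
      case True
      have "c^2 \<le> (V x)^2" using True c by (metis abs_le_square_iff less_imp_le abs_of_pos)
      then have "1 \<le> (V x)^2 / c^2" using c by simp
      then have "ennreal 1 \<le> ennreal ((V x)^2 / c^2)" by (rule ennreal_leI)
      also have "ennreal ((V x)^2 / c^2) = ennreal (1 / c^2) * ennreal ((V x)^2)"
        by (subst ennreal_mult[symmetric]) (simp_all)
      finally show ?thesis using True x by simp
    next
      case False
      then show ?thesis by simp
    qed
  qed
  also have "\<dots> = ennreal (1 / c^2) * (\<integral>\<^sup>+x. ennreal ((V x)^2) \<partial>M)"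
    by (rule nn_integral_cmult) (use Vm in measurable)
  finally show ?thesis .
qed

lemma geo_id:
  fixes \<alpha> l :: real
  assumes "0 < \<alpha>" "l \<noteq> 0"
  defines "r \<equiv> 2 powr (-(\<alpha>/4))"
  shows "2^n * (1/2^n) powr (1+\<alpha>) / (l * r^n)^2 = (r^2)^n / l^2"
proof -
  have rpos: "0 < r" unfolding r_def by simp
  have r4: "r^4 = 2 powr (-\<alpha>)" unfolding r_def by (simp add: powr_power)
  have a: "(1/2^n :: real) = 2 powr (-real n)" by (simp add: powr_minus_divide powr_realpow)
  have "(1/2^n :: real) powr (1+\<alpha>) = 2 powr (-real n * (1 + \<alpha>))" unfolding a by (simp add: powr_powr)
  also have "\<dots> = 2 powr (-real n) * 2 powr (real n * (-\<alpha>))" by (simp add: powr_add[symmetric] algebra_simps)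
  also have "\<dots> = (1/2^n) * (2 powr (-\<alpha>))^n" by (simp add: powr_power a)
  finally have p: "(1/2^n :: real) powr (1+\<alpha>) = (1/2^n) * (r^4)^n" unfolding r4 .
  have "2^n * (1/2^n) powr (1+\<alpha>) / (l * r^n)^2 = (r^4)^n / (l^2 * (r^n)^2)"
    unfolding p by (simp add: power_mult_distrib)
  also have "\<dots> = (r^2)^n / l^2" using rpos assms(2)
    by (simp add: field_simps power_mult[symmetric] power_add[symmetric] mult.commute)
  finally show ?thesis .
qed

theorem mainTheorem3:
  fixes M :: "'a measure"
    and nu :: "(real \<times> 'w::polish_space) measure"
    and N :: "'a \<Rightarrow> (real \<times> 'w) measure"
    and K :: "real \<Rightarrow> 'w \<Rightarrow> real"
    and C :: "'w \<Rightarrow> real"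
    and \<alpha> :: real
    and X :: "real \<Rightarrow> real \<Rightarrow> 'a \<Rightarrow> real"
    and \<delta> :: real
  assumes nu_sets: "sets nu = sets (borel :: (real \<times> 'w) measure)"
    and nu_supp: "emeasure nu (- ({-1<..<1} \<times> UNIV)) = 0"
    and nu_sfin: "sigma_finite_measure nu"
    and nu_inf: "\<And>a. 0 < a \<Longrightarrow> a \<le> 1 \<Longrightarrow> emeasure nu ({-a<..<a} \<times> UNIV) = \<infinity>"
    and nu_u2: "(\<integral>\<^sup>+ z. ennreal ((fst z)\<^sup>2) \<partial>nu) < \<infinity>"
    and PRM: "poisson_random_measure M nu N"
    and K_meas: "(\<lambda>(t, w). K t w) \<in> borel_measurable (restrict_space borel ({0..1} \<times> UNIV))"
    and K_L2: "\<And>t. t \<in> {0..1} \<Longrightarrow>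
                 (\<integral>\<^sup>+ z. ennreal ((K t (snd z))\<^sup>2 * (fst z)\<^sup>2) \<partial>nu) < \<infinity>"
    and alpha_pos: "\<alpha> > 0"
    and C_meas: "C \<in> borel_measurable borel"
    and C_nonneg: "\<And>w. C w \<ge> 0"
    and Hoelder: "\<And>s t w. s \<in> {0..1} \<Longrightarrow> t \<in> {0..1} \<Longrightarrow>
                    \<bar>K t w - K s w\<bar>\<^sup>2 \<le> C w * \<bar>t - s\<bar> powr (1 + \<alpha>)"
    and C_int: "(\<integral>\<^sup>+ z. ennreal (C (snd z) * (fst z)\<^sup>2) \<partial>nu) < \<infinity>"
    and X_int: "\<And>\<epsilon> t. 0 < \<epsilon> \<Longrightarrow> \<epsilon> \<le> 1 \<Longrightarrow> t \<in> {0..1} \<Longrightarrow>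
                 compensated_poisson_integral M nu N
                   (\<lambda>z. K t (snd z) * fst z * indicator {u. 0 < \<bar>u\<bar> \<and> \<bar>u\<bar> < \<epsilon>} (fst z))
                   (X \<epsilon> t)"
    and X_cont: "\<And>\<epsilon> x. 0 < \<epsilon> \<Longrightarrow> \<epsilon> \<le> 1 \<Longrightarrow> x \<in> space M \<Longrightarrow>
                 continuous_on {0..1} (\<lambda>t. X \<epsilon> t x)"
    and delta_pos: "\<delta> > 0"
  shows "((\<lambda>\<epsilon>. measure M {x \<in> space M. (SUP t\<in>{0..1}. \<bar>X \<epsilon> t x\<bar>) > \<delta>})
            \<longlongrightarrow> 0) (at_right 0)"
proof -
  interpret prm M nu N by unfold_locales (rule PRM)
  have CPI0: "compensated_poisson_integral M nu N (\<lambda>_. 0) (\<lambda>_. 0)"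
    unfolding compensated_poisson_integral_def by simp
  have fst_m: "fst \<in> borel_measurable nu"
    unfolding measurable_cong_sets[OF nu_sets refl]
    by (rule borel_measurable_continuous_onI) (intro continuous_on_fst continuous_on_id)
  have snd_m: "snd \<in> nu \<rightarrow>\<^sub>M (borel :: 'w measure)"
    unfolding measurable_cong_sets[OF nu_sets refl]
    by (rule borel_measurable_continuous_onI) (intro continuous_on_snd continuous_on_id)
  have Csnd: "(\<lambda>z. C (snd z)) \<in> borel_measurable nu"
    using measurable_compose[OF snd_m C_meas] by (simp add: comp_def)
  define Cg where "Cg z = ennreal (C (snd z) * (fst z)^2)" for z
  define Fc where "Fc \<epsilon> = (\<integral>\<^sup>+z. Cg z * indicator {u. 0 < \<bar>u\<bar> \<and> \<bar>u\<bar> < \<epsilon>} (fst z) \<partial>nu)" for \<epsilon>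
  define g0 where "g0 z = ennreal ((K 0 (snd z) * fst z * indicator {u. 0 < \<bar>u\<bar> \<and> \<bar>u\<bar> < (1::real)} (fst z))^2)" for z
  define F0 where "F0 \<epsilon> = (\<integral>\<^sup>+z. g0 z * indicator {u. 0 < \<bar>u\<bar> \<and> \<bar>u\<bar> < \<epsilon>} (fst z) \<partial>nu)" for \<epsilon>
  have Cgm: "Cg \<in> borel_measurable nu" unfolding Cg_def using Csnd fst_m by measurable
  have Cgfin: "(\<integral>\<^sup>+z. Cg z \<partial>nu) < \<infinity>" unfolding Cg_def by (rule C_int)
  have X1: "compensated_poisson_integral M nu N
      (\<lambda>z. K 0 (snd z) * fst z * indicator {u. 0 < \<bar>u\<bar> \<and> \<bar>u\<bar> < (1::real)} (fst z)) (X 1 0)"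
    by (rule X_int) simp_all
  have g0m: "g0 \<in> borel_measurable nu" unfolding g0_def using CPI_parts(1)[OF X1] by measurable
  have g0fin: "(\<integral>\<^sup>+z. g0 z \<partial>nu) < \<infinity>" unfolding g0_def by (rule CPI_parts(2)[OF X1])
  have Fc_lim: "(Fc \<longlongrightarrow> 0) (at_right 0)" unfolding Fc_def[abs_def] by (rule vanish[OF Cgm fst_m Cgfin])
  have F0_lim: "(F0 \<longlongrightarrow> 0) (at_right 0)" unfolding F0_def[abs_def] by (rule vanish[OF g0m fst_m g0fin])

  have B0: "(\<integral>\<^sup>+x. ennreal ((X \<epsilon> 0 x)^2) \<partial>M) \<le> 12 * F0 \<epsilon>" if e: "0 < \<epsilon>" "\<epsilon> \<le> 1" for \<epsilon>
  proof -
    have "(\<integral>\<^sup>+x. ennreal ((X \<epsilon> 0 x - 0)^2) \<partial>M) \<le>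
        12 * (\<integral>\<^sup>+z. ennreal ((K 0 (snd z) * fst z * indicator {u. 0 < \<bar>u\<bar> \<and> \<bar>u\<bar> < \<epsilon>} (fst z) - 0)^2) \<partial>nu)"
      by (rule CPI_diff[OF nu_sfin X_int[OF e] CPI0]) simp
    also have "(\<integral>\<^sup>+z. ennreal ((K 0 (snd z) * fst z * indicator {u. 0 < \<bar>u\<bar> \<and> \<bar>u\<bar> < \<epsilon>} (fst z) - 0)^2) \<partial>nu) = F0 \<epsilon>"
      unfolding F0_def g0_def by (rule nn_integral_cong) (use e in \<open>auto simp: indicator_def\<close>)
    finally show ?thesis by simp
  qed
  have B1: "(\<integral>\<^sup>+x. ennreal ((X \<epsilon> t x - X \<epsilon> s x)^2) \<partial>M) \<le> 12 * (ennreal (\<bar>t - s\<bar> powr (1 + \<alpha>)) * Fc \<epsilon>)"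
    if e: "0 < \<epsilon>" "\<epsilon> \<le> 1" and st: "s \<in> {0..1}" "t \<in> {0..1}" for \<epsilon> s t
  proof -
    have "(\<integral>\<^sup>+x. ennreal ((X \<epsilon> t x - X \<epsilon> s x)^2) \<partial>M) \<le>
        12 * (\<integral>\<^sup>+z. ennreal ((K t (snd z) * fst z * indicator {u. 0 < \<bar>u\<bar> \<and> \<bar>u\<bar> < \<epsilon>} (fst z) -
                                  K s (snd z) * fst z * indicator {u. 0 < \<bar>u\<bar> \<and> \<bar>u\<bar> < \<epsilon>} (fst z))^2) \<partial>nu)"
      by (rule CPI_diff[OF nu_sfin X_int[OF e st(2)] X_int[OF e st(1)]])
    also have "(\<integral>\<^sup>+z. ennreal ((K t (snd z) * fst z * indicator {u. 0 < \<bar>u\<bar> \<and> \<bar>u\<bar> < \<epsilon>} (fst z) -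
                                  K s (snd z) * fst z * indicator {u. 0 < \<bar>u\<bar> \<and> \<bar>u\<bar> < \<epsilon>} (fst z))^2) \<partial>nu)
        \<le> (\<integral>\<^sup>+z. ennreal (\<bar>t - s\<bar> powr (1 + \<alpha>)) * (Cg z * indicator {u. 0 < \<bar>u\<bar> \<and> \<bar>u\<bar> < \<epsilon>} (fst z)) \<partial>nu)"
    proof (rule nn_integral_mono)
      fix z :: "real \<times> 'w"
      have H: "\<bar>K t (snd z) - K s (snd z)\<bar>\<^sup>2 \<le> C (snd z) * \<bar>t - s\<bar> powr (1 + \<alpha>)" by (rule Hoelder[OF st])
      have eq: "(K t (snd z) * fst z * indicator {u. 0 < \<bar>u\<bar> \<and> \<bar>u\<bar> < \<epsilon>} (fst z) -
                K s (snd z) * fst z * indicator {u. 0 < \<bar>u\<bar> \<and> \<bar>u\<bar> < \<epsilon>} (fst z))^2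
             = \<bar>K t (snd z) - K s (snd z)\<bar>\<^sup>2 * ((fst z)^2 * indicator {u. 0 < \<bar>u\<bar> \<and> \<bar>u\<bar> < \<epsilon>} (fst z))"
        by (simp add: indicator_def power2_eq_square algebra_simps)
      have "\<bar>K t (snd z) - K s (snd z)\<bar>\<^sup>2 * ((fst z)^2 * indicator {u. 0 < \<bar>u\<bar> \<and> \<bar>u\<bar> < \<epsilon>} (fst z))
          \<le> C (snd z) * \<bar>t - s\<bar> powr (1 + \<alpha>) * ((fst z)^2 * indicator {u. 0 < \<bar>u\<bar> \<and> \<bar>u\<bar> < \<epsilon>} (fst z))"
        by (rule mult_right_mono[OF H]) simp
      then have "ennreal ((K t (snd z) * fst z * indicator {u. 0 < \<bar>u\<bar> \<and> \<bar>u\<bar> < \<epsilon>} (fst z) -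
                K s (snd z) * fst z * indicator {u. 0 < \<bar>u\<bar> \<and> \<bar>u\<bar> < \<epsilon>} (fst z))^2)
          \<le> ennreal (\<bar>t - s\<bar> powr (1 + \<alpha>) * (C (snd z) * (fst z)^2 * indicator {u. 0 < \<bar>u\<bar> \<and> \<bar>u\<bar> < \<epsilon>} (fst z)))"
        unfolding eq by (intro ennreal_leI) (simp add: algebra_simps)
      also have "\<dots> = ennreal (\<bar>t - s\<bar> powr (1 + \<alpha>)) * (Cg z * indicator {u. 0 < \<bar>u\<bar> \<and> \<bar>u\<bar> < \<epsilon>} (fst z))"
        unfolding Cg_def using C_nonneg[of "snd z"]
        by (simp add: ennreal_mult ennreal_indicator)
      finally show "ennreal ((K t (snd z) * fst z * indicator {u. 0 < \<bar>u\<bar> \<and> \<bar>u\<bar> < \<epsilon>} (fst z) -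
                K s (snd z) * fst z * indicator {u. 0 < \<bar>u\<bar> \<and> \<bar>u\<bar> < \<epsilon>} (fst z))^2)
          \<le> ennreal (\<bar>t - s\<bar> powr (1 + \<alpha>)) * (Cg z * indicator {u. 0 < \<bar>u\<bar> \<and> \<bar>u\<bar> < \<epsilon>} (fst z))" .
    qed
    also have "\<dots> = ennreal (\<bar>t - s\<bar> powr (1 + \<alpha>)) * Fc \<epsilon>"
      unfolding Fc_def by (rule nn_integral_cmult) (use Cgm fst_m in measurable)
    finally show ?thesis by (simp add: mult_left_mono)
  qed
  define r where "r = 2 powr (-(\<alpha>/4))"
  have r0: "0 < r" unfolding r_def by simp
  have r1: "r < 1" unfolding r_def by (rule powr_less_one) (use alpha_pos in simp_all)
  define l where "l = \<delta> * (1 - r) / 2"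
  have l0: "0 < l" unfolding l_def using delta_pos r1 by simp
  define b where "b n = l * r^n" for n :: nat
  have b0: "0 < b n" for n unfolding b_def using l0 r0 by simp
  have bsum: "(\<Sum>i\<le>n. b i) \<le> \<delta> / 2" for n
  proof -
    have sg: "summable (\<lambda>i. r^i)" by (rule summable_geometric) (use r0 r1 in simp)
    have sb: "summable b" unfolding b_def by (intro summable_mult sg)
    have "(\<Sum>i\<le>n. b i) \<le> suminf b" by (rule sum_le_suminf[OF sb]) (use b0 in \<open>auto intro: less_imp_le\<close>)
    also have "suminf b = l * (1 / (1 - r))" unfolding b_def
      using suminf_mult[OF sg, of l] suminf_geometric[of r] r0 r1 by simp
    also have "\<dots> = \<delta> / 2" unfolding l_def using r1 by (simp add: field_simps)
    finally show ?thesis .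
  qed
  define BsR where "BsR = (\<Sum>n. (r^2)^n / l^2)"
  have sBs: "summable (\<lambda>n. (r^2)^n / l^2)"
    by (intro summable_divide summable_geometric) (use r0 r1 in \<open>simp add: power_less_one_iff abs_less_iff\<close>)
  have Bs_eq: "(\<Sum>n. ennreal ((r^2)^n / l^2)) = ennreal BsR"
    unfolding BsR_def by (rule suminf_ennreal2[OF _ sBs]) simp
  define A0 where "A0 = ennreal (12 / (\<delta>/2)^2)"
  define A1 where "A1 = ennreal (12 * BsR)"

  have main: "emeasure M {x \<in> space M. (SUP t\<in>{0..1}. \<bar>X \<epsilon> t x\<bar>) > \<delta>} \<le> A0 * F0 \<epsilon> + A1 * Fc \<epsilon>"
    if e: "0 < \<epsilon>" "\<epsilon> \<le> 1" for \<epsilon>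
  proof -
    have Xm: "X \<epsilon> t \<in> borel_measurable M" if "t \<in> {0..1}" for t using CPI_parts(3)[OF X_int[OF e that]] .
    define D where "D n k x = X \<epsilon> ((real k + 1)/2^n) x - X \<epsilon> (real k / 2^n) x" for n k x
    have dy1: "(real k + 1)/2^n \<in> {0..1}" if "k < 2^n" for n k :: nat
    proof -
      have "real k + 1 \<le> 2^n" using that by (metis Suc_leI of_nat_Suc of_nat_le_iff of_nat_numeral of_nat_power add.commute)
      then show ?thesis by (simp add: divide_le_eq_1)
    qed
    have dy2: "real k / 2^n \<in> {0..1}" if "k < 2^n" for n k :: nat
    proof -
      have "real k \<le> 2^n" using that by (metis less_imp_le of_nat_le_iff of_nat_numeral of_nat_power)
      then show ?thesis by (simp add: divide_le_eq_1)
    qed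
    have Dm: "D n k \<in> borel_measurable M" if "k < 2^n" for n k
      unfolding D_def using Xm[OF dy1[OF that]] Xm[OF dy2[OF that]] by measurable
    define U1 where "U1 = {x\<in>space M. \<delta>/2 < \<bar>X \<epsilon> 0 x\<bar>}"
    define U2 where "U2 n k = {x\<in>space M. b n < \<bar>D n k x\<bar>}" for n k
    define U where "U = U1 \<union> (\<Union>n. \<Union>k\<in>{..<2^n}. U2 n k)"
    have U1s: "U1 \<in> sets M" unfolding U1_def using Xm[of 0] by measurable
    have U2s: "U2 n k \<in> sets M" if "k < 2^n" for n k unfolding U2_def using Dm[OF that] by measurable
    have U2us: "(\<Union>k\<in>{..<2^n}. U2 n k) \<in> sets M" for n by (intro sets.finite_UN) (use U2s in auto)
    have Us: "U \<in> sets M" unfolding U_def using U1s U2us by auto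
    have sub: "{x \<in> space M. (SUP t\<in>{0..1}. \<bar>X \<epsilon> t x\<bar>) > \<delta>} \<subseteq> U"
    proof
      fix x assume x: "x \<in> {x \<in> space M. (SUP t\<in>{0..1}. \<bar>X \<epsilon> t x\<bar>) > \<delta>}"
      show "x \<in> U"
      proof (rule ccontr)
        assume "x \<notin> U"
        then have a: "\<bar>X \<epsilon> 0 x\<bar> \<le> \<delta>/2" and d: "\<And>n k. k < 2^n \<Longrightarrow> \<bar>D n k x\<bar> \<le> b n"
          using x by (auto simp: U_def U1_def U2_def not_less)
        have xs: "x \<in> space M" using x by simp
        have "\<bar>X \<epsilon> t x\<bar> \<le> \<delta>/2 + \<delta>/2" if "t \<in> {0..1}" for t
          by (rule chain_bound[OF X_cont[OF e xs] a _ bsum that]) (use d in \<open>simp add: D_def\<close>)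
        then have "(SUP t\<in>{0..1}. \<bar>X \<epsilon> t x\<bar>) \<le> \<delta>" by (intro cSUP_least) auto
        then show False using x by simp
      qed
    qed
    have E1: "emeasure M U1 \<le> A0 * F0 \<epsilon>"
    proof -
      have "emeasure M U1 \<le> ennreal (1 / (\<delta>/2)^2) * (\<integral>\<^sup>+x. ennreal ((X \<epsilon> 0 x)^2) \<partial>M)"
        unfolding U1_def by (rule cheb[OF Xm]) (use delta_pos in simp_all)
      also have "\<dots> \<le> ennreal (1 / (\<delta>/2)^2) * (12 * F0 \<epsilon>)" by (intro mult_left_mono B0[OF e]) simp
      also have "\<dots> = A0 * F0 \<epsilon>"
      proof -
        have "ennreal (1 / (\<delta>/2)^2) * 12 = ennreal (1 / (\<delta>/2)^2) * ennreal 12" by simp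
        also have "\<dots> = ennreal (1 / (\<delta>/2)^2 * 12)" by (rule ennreal_mult[symmetric]) simp_all
        finally have c12: "ennreal (1 / (\<delta>/2)^2) * 12 = ennreal (12 / (\<delta>/2)^2)" by simp
        show ?thesis unfolding A0_def c12[symmetric] by (simp only: mult.assoc)
      qed
      finally show ?thesis .
    qed
    have E2: "emeasure M (\<Union>n. \<Union>k\<in>{..<2^n}. U2 n k) \<le> A1 * Fc \<epsilon>"
    proof -
      have "emeasure M (\<Union>n. \<Union>k\<in>{..<2^n}. U2 n k) \<le> (\<Sum>n. emeasure M (\<Union>k\<in>{..<2^n}. U2 n k))"
        by (rule emeasure_subadditive_countably) (use U2us in auto)
      also have "\<dots> \<le> (\<Sum>n. 12 * Fc \<epsilon> * ennreal ((r^2)^n / l^2))"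
      proof (rule suminf_le)
        fix n
        have "emeasure M (\<Union>k\<in>{..<2^n}. U2 n k) \<le> (\<Sum>k\<in>{..<2^n}. emeasure M (U2 n k))"
          by (rule emeasure_subadditive_finite) (use U2s in auto)
        also have "\<dots> \<le> (\<Sum>k\<in>{..<(2::nat)^n}. ennreal (1/(b n)^2) * (12 * (ennreal ((1/2^n) powr (1+\<alpha>)) * Fc \<epsilon>)))"
        proof (rule sum_mono)
          fix k assume k: "k \<in> {..<(2::nat)^n}"
          then have k': "k < 2^n" by simp
          have "emeasure M (U2 n k) \<le> ennreal (1/(b n)^2) * (\<integral>\<^sup>+x. ennreal ((D n k x)^2) \<partial>M)"
            unfolding U2_def by (rule cheb[OF Dm[OF k'] b0])
          also have "(\<integral>\<^sup>+x. ennreal ((D n k x)^2) \<partial>M) \<le> 12 * (ennreal ((1/2^n) powr (1+\<alpha>)) * Fc \<epsilon>)"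
          proof -
            have eqd: "\<bar>(real k + 1)/2^n - real k / 2^n\<bar> = 1/2^n" by (simp add: add_divide_distrib)
            show ?thesis unfolding D_def using B1[OF e dy2[OF k'] dy1[OF k']] unfolding eqd .
          qed
          finally show "emeasure M (U2 n k) \<le> ennreal (1/(b n)^2) * (12 * (ennreal ((1/2^n) powr (1+\<alpha>)) * Fc \<epsilon>))"
            by (simp add: mult_left_mono)
        qed
        also have "\<dots> = of_nat (2^n) * (ennreal (1/(b n)^2) * (12 * (ennreal ((1/2^n) powr (1+\<alpha>)) * Fc \<epsilon>)))"
          by simp
        also have "\<dots> = 12 * Fc \<epsilon> * (ennreal (2^n) * ennreal (1/(b n)^2) * ennreal ((1/2^n) powr (1+\<alpha>)))"
          by (simp add: ennreal_of_nat_eq_real_of_nat mult_ac)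
        also have "ennreal (2^n) * ennreal (1/(b n)^2) * ennreal ((1/2^n) powr (1+\<alpha>)) = ennreal ((r^2)^n / l^2)"
        proof -
          have "ennreal (2^n) * ennreal (1/(b n)^2) * ennreal ((1/2^n) powr (1+\<alpha>)) = ennreal (2^n * (1/2^n) powr (1+\<alpha>) / (l * r^n)^2)"
            unfolding b_def by (simp add: ennreal_mult[symmetric] field_simps)
          also have "2^n * (1/2^n) powr (1+\<alpha>) / (l * r^n)^2 = (r^2)^n / l^2"
            unfolding r_def by (rule geo_id) (use alpha_pos l0 in simp_all)
          finally show ?thesis .
        qed
        finally show "emeasure M (\<Union>k\<in>{..<2^n}. U2 n k) \<le> 12 * Fc \<epsilon> * ennreal ((r^2)^n / l^2)" .
      qed (simp_all add: summableI)
      also have "\<dots> = 12 * Fc \<epsilon> * ennreal BsR" by (simp add: Bs_eq[symmetric])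
      also have "\<dots> = A1 * Fc \<epsilon>"
      proof -
        have BsR0: "0 \<le> BsR" unfolding BsR_def by (rule suminf_nonneg[OF sBs]) simp
        have "A1 = ennreal 12 * ennreal BsR" unfolding A1_def by (rule ennreal_mult) (simp_all add: BsR0)
        then show ?thesis by (simp add: mult_ac)
      qed
      finally show ?thesis .
    qed
    have "emeasure M {x \<in> space M. (SUP t\<in>{0..1}. \<bar>X \<epsilon> t x\<bar>) > \<delta>} \<le> emeasure M U"
      by (rule emeasure_mono[OF sub Us])
    also have "\<dots> \<le> emeasure M U1 + emeasure M (\<Union>n. \<Union>k\<in>{..<2^n}. U2 n k)"
      unfolding U_def by (rule emeasure_subadditive) (use U1s U2us in auto)
    also have "\<dots> \<le> A0 * F0 \<epsilon> + A1 * Fc \<epsilon>" by (rule add_mono[OF E1 E2])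
    finally show ?thesis .
  qed
  have lim: "((\<lambda>\<epsilon>. A0 * F0 \<epsilon> + A1 * Fc \<epsilon>) \<longlongrightarrow> A0 * 0 + A1 * 0) (at_right 0)"
    by (intro tendsto_add ennreal_tendsto_cmult F0_lim Fc_lim) (simp_all add: A0_def A1_def)
  have elim: "((\<lambda>\<epsilon>. emeasure M {x \<in> space M. (SUP t\<in>{0..1}. \<bar>X \<epsilon> t x\<bar>) > \<delta>}) \<longlongrightarrow> ennreal 0) (at_right 0)"
  proof (rule tendsto_sandwich[OF _ _ tendsto_const])
    show "\<forall>\<^sub>F \<epsilon> in at_right 0. ennreal 0 \<le> emeasure M {x \<in> space M. (SUP t\<in>{0..1}. \<bar>X \<epsilon> t x\<bar>) > \<delta>}" by simp
    show "\<forall>\<^sub>F \<epsilon> in at_right 0. emeasure M {x \<in> space M. (SUP t\<in>{0..1}. \<bar>X \<epsilon> t x\<bar>) > \<delta>} \<le> A0 * F0 \<epsilon> + A1 * Fc \<epsilon>"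
      unfolding eventually_at_right_field by (intro exI[of _ 1]) (auto intro: main)
    show "((\<lambda>\<epsilon>. A0 * F0 \<epsilon> + A1 * Fc \<epsilon>) \<longlongrightarrow> ennreal 0) (at_right 0)" using lim by simp
  qed
  have "((\<lambda>\<epsilon>. enn2real (emeasure M {x \<in> space M. (SUP t\<in>{0..1}. \<bar>X \<epsilon> t x\<bar>) > \<delta>})) \<longlongrightarrow> 0) (at_right 0)"
    by (rule tendsto_enn2real[OF elim]) simp
  then show ?thesis by (simp add: measure_def)
qed

end
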